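(* Let $k\ge1$. For finite $A\subset\mathbb{R}^k$ let $\delta^{(1)}_{\mathrm{diam}}(A)$ and $\delta^{(2)}_{\mathrm{diam}}(A)$ be the diameters of $A$ with respect to the $\ell_1$ and $\ell_2$ (Euclidean) metrics respectively, let $\delta_1(A)=\sum_{i=1}^k\max\{|a_i-b_i|:a,b\in A\}$ be the $\ell_1$ diversity and $\delta_w$ the mean-width diversity on $\mathbb{R}^k$. Then for all finite $A\subset\mathbb{R}^k$, \[ \delta^{(1)}_{\mathrm{diam}}(A)\le\delta_1(A)\le k\,\delta^{(1)}_{\mathrm{diam}}(A), \qquad \delta^{(2)}_{\mathrm{diam}}(A)\le\delta_w(A)\le c\sqrt{k}\,\delta^{(2)}_{\mathrm{diam}}(A), \] where $c>0$ is an absolute constant (i.e. the last bound is $\mathcal{O}(\sqrt{k})\,\delta^{(2)}_{\mathrm{diam}}(A)$). All these bounds are tight: the lower bounds are attained, $\delta_1(A)=k\,\delta^{(1)}_{\mathrm{diam}}(A)$ for some $A$, and $\sup_A\delta_w(A)/\delta^{(2)}_{\mathrm{diam}}(A)$ is of order $\sqrt{k}$.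
   Context: Mean-width diversity on $\mathbb{R}^k$: for compact convex $K\subset\mathbb{R}^k$ and unit $u$, $w(K,u)=\max_{a\in K}a\cdot u-\min_{a\in K}a\cdot u$, and $m_k(K)=\frac{1}{\mu_{k-1}(S^{k-1})}\int_{S^{k-1}}w(K,u)\,d\mu_{k-1}(u)$ with $\mu_{k-1}$ surface measure on the unit sphere; then $\delta_w(A)=\frac{\pi}{B(k/2,1/2)}m_k(\mathrm{conv}(A))$, where $B$ is the beta function. *)

theory Defs
  imports "HOL-Analysis.Analysis"
begin

text \<open>Points of R^k are represented as functions nat => real, only the coordinates
  i < k being relevant (we additionally require them to vanish outside {..<k}).\<close>

definition in_Rk :: "nat \<Rightarrow> (nat \<Rightarrow> real) \<Rightarrow> bool" where
  "in_Rk k a \<longleftrightarrow> (\<forall>i\<ge>k. a i = 0)"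

definition dotk :: "nat \<Rightarrow> (nat \<Rightarrow> real) \<Rightarrow> (nat \<Rightarrow> real) \<Rightarrow> real" where
  "dotk k a b = (\<Sum>i<k. a i * b i)"

definition norm2k :: "nat \<Rightarrow> (nat \<Rightarrow> real) \<Rightarrow> real" where
  "norm2k k a = sqrt (\<Sum>i<k. (a i)\<^sup>2)"

definition norm1k :: "nat \<Rightarrow> (nat \<Rightarrow> real) \<Rightarrow> real" where
  "norm1k k a = (\<Sum>i<k. \<bar>a i\<bar>)"

definition diam1 :: "nat \<Rightarrow> (nat \<Rightarrow> real) set \<Rightarrow> real" where
  "diam1 k A = Max (insert 0 {norm1k k (\<lambda>i. a i - b i) | a b. a \<in> A \<and> b \<in> A})"

definition diam2 :: "nat \<Rightarrow> (nat \<Rightarrow> real) set \<Rightarrow> real" where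
  "diam2 k A = Max (insert 0 {norm2k k (\<lambda>i. a i - b i) | a b. a \<in> A \<and> b \<in> A})"

definition delta1 :: "nat \<Rightarrow> (nat \<Rightarrow> real) set \<Rightarrow> real" where
  "delta1 k A = (\<Sum>i<k. Max (insert 0 {\<bar>a i - b i\<bar> | a b. a \<in> A \<and> b \<in> A}))"

definition convk :: "(nat \<Rightarrow> real) set \<Rightarrow> (nat \<Rightarrow> real) set" where
  "convk A = {(\<lambda>i. \<Sum>a\<in>A. c a * a i) | c. (\<forall>a\<in>A. 0 \<le> c a) \<and> (\<Sum>a\<in>A. c a) = 1}"

definition width :: "nat \<Rightarrow> (nat \<Rightarrow> real) set \<Rightarrow> (nat \<Rightarrow> real) \<Rightarrow> real" where
  "width k K u = Sup ((\<lambda>a. dotk k a u) ` K) - Inf ((\<lambda>a. dotk k a u) ` K)"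

abbreviation lebk :: "nat \<Rightarrow> (nat \<Rightarrow> real) measure" where
  "lebk k \<equiv> PiM {..<k} (\<lambda>_. lborel)"

definition unit_ballk :: "nat \<Rightarrow> (nat \<Rightarrow> real) set" where
  "unit_ballk k = {x \<in> space (lebk k). norm2k k x < 1}"

text \<open>The normalised surface measure on S^{k-1} is the image of the uniform
  distribution on the unit ball under x \<mapsto> x/|x| (cone-measure definition of the
  surface measure: mu_{k-1}(E) = k * vol{t x | x \<in> E, 0 < t \<le> 1}).\<close>
definition sphere_avg :: "nat \<Rightarrow> ((nat \<Rightarrow> real) \<Rightarrow> real) \<Rightarrow> real" where
  "sphere_avg k f =
     (LINT x : unit_ballk k | lebk k. f (\<lambda>i. x i / norm2k k x)) / measure (lebk k) (unit_ballk k)"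

definition mean_width :: "nat \<Rightarrow> (nat \<Rightarrow> real) set \<Rightarrow> real" where
  "mean_width k K = sphere_avg k (width k K)"

definition delta_w :: "nat \<Rightarrow> (nat \<Rightarrow> real) set \<Rightarrow> real" where
  "delta_w k A = pi / Beta (real k / 2) (1 / 2) * mean_width k (convk A)"

end

theory Submission
  imports Defs "HOL-Probability.Probability"
begin


lemma psf_lborel: "product_sigma_finite (\<lambda>_::nat. lborel::real measure)"
  by (simp add: product_sigma_finite_def lborel.sigma_finite_measure_axioms)

lemma scale_distr:
  fixes t :: real assumes t: "t > 0"
  shows "distr (lebk k) (lebk k) (\<lambda>x. \<lambda>i\<in>{..<k}. t * x i) = density (lebk k) (\<lambda>_. ennreal ((1/t)^k))"
proof (rule measure_eqI_PiM_finite[where I="{..<k}" and M="\<lambda>_. lborel"])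
  interpret product_sigma_finite "\<lambda>_::nat. lborel::real measure" by (rule psf_lborel)
  show "finite {..<k}" by simp
  show "sets (distr (lebk k) (lebk k) (\<lambda>x. \<lambda>i\<in>{..<k}. t * x i)) = sets (lebk k)" by simp
  show "sets (density (lebk k) (\<lambda>_. ennreal ((1/t)^k))) = sets (lebk k)" by simp
  fix A :: "nat \<Rightarrow> real set" assume A: "\<And>i. i \<in> {..<k} \<Longrightarrow> A i \<in> sets lborel"
  have meas: "(\<lambda>x. \<lambda>i\<in>{..<k}. t * x i) \<in> lebk k \<rightarrow>\<^sub>M lebk k" by measurable
  have pre: "(\<lambda>x. \<lambda>i\<in>{..<k}. t * x i) -` Pi\<^sub>E {..<k} A \<inter> space (lebk k) = Pi\<^sub>E {..<k} (\<lambda>i. ((*) t) -` A i)"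
    by (auto simp: space_PiM PiE_iff)
  have e1: "emeasure lborel (((*) t) -` A i) = ennreal (1/t) * emeasure lborel (A i)" if "i \<in> {..<k}" for i
  proof -
    have "emeasure lborel (((*) t) -` A i) = emeasure lborel (((*) t) -` A i \<inter> space lborel)" by simp
    also have "\<dots> = emeasure (distr lborel borel ((*) t)) (A i)"
      using A[OF that] by (subst emeasure_distr) auto
    also have "\<dots> = emeasure (density lborel (\<lambda>_. ennreal (inverse \<bar>t\<bar>))) (A i)"
      using t by (simp add: lborel_distr_mult)
    also have "\<dots> = ennreal (1/t) * emeasure lborel (A i)"
      using A[OF that] t by (subst emeasure_density_const) (auto simp: field_simps)
    finally show ?thesis .
  qed
  have "emeasure (distr (lebk k) (lebk k) (\<lambda>x. \<lambda>i\<in>{..<k}. t * x i)) (Pi\<^sub>E {..<k} A)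
      = emeasure (lebk k) (Pi\<^sub>E {..<k} (\<lambda>i. ((*) t) -` A i))"
    using A by (subst emeasure_distr[OF meas]) (auto simp: pre intro!: sets_PiM_I_finite)
  also have "\<dots> = (\<Prod>i<k. emeasure lborel (((*) t) -` A i))"
  proof -
    have "((*) t) -` A i \<in> sets borel" if "i < k" for i
      using A[of i] that measurable_sets_borel[of "(*) t" borel "A i"] by auto
    then show ?thesis by (subst emeasure_PiM) auto
  qed
  also have "\<dots> = (\<Prod>i<k. ennreal (1/t) * emeasure lborel (A i))"
    using e1 by (intro prod.cong) auto
  also have "\<dots> = ennreal ((1/t)^k) * (\<Prod>i<k. emeasure lborel (A i))"
    using t by (simp add: prod.distrib ennreal_power)
  also have "\<dots> = emeasure (density (lebk k) (\<lambda>_. ennreal ((1/t)^k))) (Pi\<^sub>E {..<k} A)"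
    using A by (subst emeasure_density_const, auto intro!: sets_PiM_I_finite) (subst emeasure_PiM; auto)
  finally show "emeasure (distr (lebk k) (lebk k) (\<lambda>x. \<lambda>i\<in>{..<k}. t * x i)) (Pi\<^sub>E {..<k} A) =
     emeasure (density (lebk k) (\<lambda>_. ennreal ((1/t)^k))) (Pi\<^sub>E {..<k} A)" .
next
  interpret product_sigma_finite "\<lambda>_::nat. lborel::real measure" by (rule psf_lborel)
  let ?A = "\<lambda>n::nat. Pi\<^sub>E {..<k} (\<lambda>_. {-real n..real n})"
  show "range ?A \<subseteq> prod_algebra {..<k} (\<lambda>_. lborel)"
    by (auto intro!: prod_algebraI_finite)
  show "(\<Union>n. ?A n) = space (lebk k)"
  proof
    show "(\<Union>n. ?A n) \<subseteq> space (lebk k)" by (auto simp: space_PiM PiE_iff)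
    show "space (lebk k) \<subseteq> (\<Union>n. ?A n)"
    proof
      fix x :: "nat \<Rightarrow> real" assume x: "x \<in> space (lebk k)"
      obtain n :: nat where n: "Max (insert 0 ((\<lambda>i. \<bar>x i\<bar>) ` {..<k})) \<le> n" using real_arch_simple by blast
      have "\<bar>x i\<bar> \<le> Max (insert 0 ((\<lambda>i. \<bar>x i\<bar>) ` {..<k}))" if "i < k" for i
        using that by (intro Max_ge) auto
      with n have "x \<in> ?A n" using x by (force simp: space_PiM PiE_iff abs_le_iff)
      then show "x \<in> (\<Union>n. ?A n)" by blast
    qed
  qed
  show "emeasure (distr (lebk k) (lebk k) (\<lambda>x. \<lambda>i\<in>{..<k}. t * x i)) (?A n) \<noteq> \<infinity>" for n
  proof -
    have meas: "(\<lambda>x. \<lambda>i\<in>{..<k}. t * x i) \<in> lebk k \<rightarrow>\<^sub>M lebk k" by measurable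
    have "(\<lambda>x. \<lambda>i\<in>{..<k}. t * x i) -` ?A n \<inter> space (lebk k) = Pi\<^sub>E {..<k} (\<lambda>i. ((*) t) -` {-real n..real n})"
      by (auto simp: space_PiM PiE_iff)
    moreover have "((*) t) -` {-real n..real n} = {-real n/t..real n/t}"
      using t by (auto simp: field_simps)
    moreover have "- (real n / t) \<le> real n / t" using t by simp
    ultimately show ?thesis
      by (subst emeasure_distr[OF meas]) (auto simp: emeasure_PiM ennreal_prod_eq_top power_eq_top_ennreal_iff)
  qed
qed

lemma scale_nn:
  fixes t :: real assumes t: "t > 0" and f: "f \<in> borel_measurable (lebk k)"
  shows "(\<integral>\<^sup>+x. f (\<lambda>i\<in>{..<k}. t * x i) \<partial>lebk k) = ennreal ((1/t)^k) * (\<integral>\<^sup>+x. f x \<partial>lebk k)"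
proof -
  have meas: "(\<lambda>x. \<lambda>i\<in>{..<k}. t * x i) \<in> lebk k \<rightarrow>\<^sub>M lebk k" by measurable
  have "(\<integral>\<^sup>+x. f (\<lambda>i\<in>{..<k}. t * x i) \<partial>lebk k) = (\<integral>\<^sup>+x. f x \<partial>distr (lebk k) (lebk k) (\<lambda>x. \<lambda>i\<in>{..<k}. t * x i))"
    using f by (subst nn_integral_distr[OF meas]) auto
  also have "\<dots> = (\<integral>\<^sup>+x. ennreal ((1/t)^k) * f x \<partial>lebk k)"
    using f t by (simp add: scale_distr nn_integral_density)
  also have "\<dots> = ennreal ((1/t)^k) * (\<integral>\<^sup>+x. f x \<partial>lebk k)"
    using f by (simp add: nn_integral_cmult)
  finally show ?thesis .
qed

lemma comp_meas: "i < k \<Longrightarrow> (\<lambda>x. x i) \<in> borel_measurable (lebk k)"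
  by measurable

lemma norm2k_meas: "norm2k k \<in> borel_measurable (lebk k)"
proof -
  have "(\<lambda>x. \<Sum>i<k. (x i)\<^sup>2) \<in> borel_measurable (lebk k)"
    by (intro borel_measurable_sum) (auto intro!: borel_measurable_power comp_meas)
  then show ?thesis unfolding norm2k_def[abs_def] by measurable
qed

lemma norm2k_scale:
  assumes "t \<ge> 0" shows "norm2k k (\<lambda>i\<in>{..<k}. t * x i) = t * norm2k k x"
proof -
  have "(\<Sum>i<k. ((\<lambda>i\<in>{..<k}. t * x i) i)\<^sup>2) = t\<^sup>2 * (\<Sum>i<k. (x i)\<^sup>2)"
    by (simp add: sum_distrib_left power_mult_distrib)
  then show ?thesis using assms unfolding norm2k_def by (simp add: real_sqrt_mult)
qed

lemma norm2k_nonneg: "norm2k k x \<ge> 0"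
  unfolding norm2k_def by (auto intro!: sum_nonneg)

lemma scale_space: "x \<in> space (lebk k) \<Longrightarrow> (\<lambda>i\<in>{..<k}. t * x i) \<in> space (lebk k)"
  by (auto simp: space_PiM)


declare norm2k_meas[measurable]

lemma ball_scaled:
  fixes g :: "(nat \<Rightarrow> real) \<Rightarrow> ennreal"
  assumes g[measurable]: "g \<in> borel_measurable (lebk k)"
    and hom: "\<And>x t. x \<in> space (lebk k) \<Longrightarrow> t > 0 \<Longrightarrow> g (\<lambda>i\<in>{..<k}. t * x i) = g x"
    and a: "a > 0"
  shows "(\<integral>\<^sup>+x. g x * indicator {x\<in>space (lebk k). norm2k k x < a} x \<partial>lebk k)
       = ennreal (a^k) * (\<integral>\<^sup>+x. g x * indicator (unit_ballk k) x \<partial>lebk k)"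
proof -
  let ?f = "\<lambda>x. g x * indicator {x\<in>space (lebk k). norm2k k x < a} x"
  have fm: "?f \<in> borel_measurable (lebk k)" by measurable
  have "(\<integral>\<^sup>+x. ?f (\<lambda>i\<in>{..<k}. a * x i) \<partial>lebk k) = (\<integral>\<^sup>+x. g x * indicator (unit_ballk k) x \<partial>lebk k)"
  proof (rule nn_integral_cong)
    fix x assume x: "x \<in> space (lebk k)"
    have "(\<lambda>i\<in>{..<k}. a * x i) \<in> space (lebk k)" using x by (rule scale_space)
    moreover have "norm2k k (\<lambda>i\<in>{..<k}. a * x i) < a \<longleftrightarrow> norm2k k x < 1"
      using a by (simp add: norm2k_scale)
    ultimately show "?f (\<lambda>i\<in>{..<k}. a * x i) = g x * indicator (unit_ballk k) x"
      using x a hom[OF x a] by (auto simp: unit_ballk_def indicator_def)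
  qed
  moreover have "(\<integral>\<^sup>+x. ?f (\<lambda>i\<in>{..<k}. a * x i) \<partial>lebk k) = ennreal ((1/a)^k) * (\<integral>\<^sup>+x. ?f x \<partial>lebk k)"
    using a fm by (rule scale_nn)
  ultimately have "ennreal (a^k) * (\<integral>\<^sup>+x. g x * indicator (unit_ballk k) x \<partial>lebk k)
      = ennreal (a^k) * (ennreal ((1/a)^k) * (\<integral>\<^sup>+x. ?f x \<partial>lebk k))" by simp
  also have "\<dots> = ennreal (a^k * (1/a)^k) * (\<integral>\<^sup>+x. ?f x \<partial>lebk k)"
    using a by (simp add: ennreal_mult mult.assoc)
  also have "a^k * (1/a)^k = 1" using a by (simp add: power_mult_distrib[symmetric])
  finally show ?thesis by simp
qed


lemma pow_integral:
  assumes a: "a \<ge> 0" and k: "k \<ge> 1"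
  shows "(\<integral>\<^sup>+r. ennreal (real k * r^(k-1)) * indicator {0..a} r \<partial>lborel) = ennreal (a^k)"
proof -
  have "((\<lambda>r. real k * r^(k-1)) has_integral (a^k - 0^k)) {0..a}"
  proof (rule fundamental_theorem_of_calculus[OF a])
    fix x :: real assume "x \<in> {0..a}"
    have "((\<lambda>r. r^k) has_real_derivative (real k * x^(k-1))) (at x within {0..a})"
      by (auto intro!: derivative_eq_intros)
    then show "((\<lambda>r. r^k) has_vector_derivative (real k * x^(k-1))) (at x within {0..a})"
      by (simp add: has_real_derivative_iff_has_vector_derivative)
  qed
  moreover have "(0::real)^k = 0" using k by simp
  ultimately have "((\<lambda>r. real k * r^(k-1)) has_integral (a^k)) {0..a}" by simp
  then show ?thesis by (intro nn_integral_has_integral_lebesgue') auto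
qed

lemma sets_borel_Iio: "sets (borel :: real measure) = sigma_sets UNIV (range lessThan)"
  by (subst borel_Iio) (simp add: sets_measure_of)

lemma polar:
  fixes g :: "(nat \<Rightarrow> real) \<Rightarrow> ennreal" and \<psi> :: "real \<Rightarrow> ennreal"
  assumes k: "k \<ge> 1"
    and g[measurable]: "g \<in> borel_measurable (lebk k)"
    and hom: "\<And>x t. x \<in> space (lebk k) \<Longrightarrow> t > 0 \<Longrightarrow> g (\<lambda>i\<in>{..<k}. t * x i) = g x"
    and fin: "(\<integral>\<^sup>+x. g x * indicator (unit_ballk k) x \<partial>lebk k) < \<infinity>"
    and psi[measurable]: "\<psi> \<in> borel_measurable borel"
  shows "(\<integral>\<^sup>+x. g x * \<psi> (norm2k k x) \<partial>lebk k) =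
     (\<integral>\<^sup>+x. g x * indicator (unit_ballk k) x \<partial>lebk k) *
     (\<integral>\<^sup>+r. \<psi> r * (indicator {0<..} r * ennreal (real k * r^(k-1))) \<partial>lborel)"
proof -
  define J where "J = (\<integral>\<^sup>+x. g x * indicator (unit_ballk k) x \<partial>lebk k)"
  define \<nu> where "\<nu> = distr (density (lebk k) g) borel (norm2k k)"
  define \<mu> where "\<mu> = density lborel (\<lambda>r. J * (indicator {0<..} r * ennreal (real k * r^(k-1))))"
  have nmeas: "norm2k k \<in> density (lebk k) g \<rightarrow>\<^sub>M borel" by simp
  have \<nu>lt: "emeasure \<nu> {..<a} = (if a > 0 then ennreal (a^k) * J else 0)" for a
  proof -
    have "emeasure \<nu> {..<a} = emeasure (density (lebk k) g) {x\<in>space (lebk k). norm2k k x < a}"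
      unfolding \<nu>_def by (subst emeasure_distr[OF nmeas]) (auto intro!: arg_cong2[where f=emeasure])
    also have "\<dots> = (\<integral>\<^sup>+x. g x * indicator {x\<in>space (lebk k). norm2k k x < a} x \<partial>lebk k)"
      by (subst emeasure_density) auto
    also have "\<dots> = (if a > 0 then ennreal (a^k) * J else 0)"
    proof (cases "a > 0")
      case True then show ?thesis unfolding J_def by (simp add: ball_scaled[OF g hom])
    next
      case False
      then have "{x\<in>space (lebk k). norm2k k x < a} = {}" using norm2k_nonneg[of k] by (auto simp: not_less intro: order.trans)
      with False show ?thesis by simp
    qed
    finally show ?thesis .
  qed
  have \<mu>lt: "emeasure \<mu> {..<a} = (if a > 0 then ennreal (a^k) * J else 0)" for a
  proof -
    have "emeasure \<mu> {..<a} = (\<integral>\<^sup>+r. J * (indicator {0<..} r * ennreal (real k * r^(k-1))) * indicator {..<a} r \<partial>lborel)"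
      unfolding \<mu>_def by (subst emeasure_density) auto
    also have "\<dots> = (if a > 0 then ennreal (a^k) * J else 0)"
    proof (cases "a > 0")
      case True
      have "(\<integral>\<^sup>+r. J * (indicator {0<..} r * ennreal (real k * r^(k-1))) * indicator {..<a} r \<partial>lborel)
          = (\<integral>\<^sup>+r. J * (ennreal (real k * r^(k-1)) * indicator {0..a} r) \<partial>lborel)"
      proof (rule nn_integral_cong_AE)
        have "AE r in lborel. r \<noteq> 0" by (rule AE_lborel_singleton)
        moreover have "AE r in lborel. r \<noteq> a" by (rule AE_lborel_singleton)
        ultimately show "AE r in lborel. J * (indicator {0<..} r * ennreal (real k * r^(k-1))) * indicator {..<a} r
            = J * (ennreal (real k * r^(k-1)) * indicator {0..a} r)"
          by eventually_elim (auto simp: indicator_def)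
      qed
      also have "\<dots> = J * ennreal (a^k)"
        using True k pow_integral[of a k] by (subst nn_integral_cmult) auto
      finally show ?thesis using True by (simp add: mult.commute)
    next
      case False
      then have "\<And>r. J * (indicator {0<..} r * ennreal (real k * r^(k-1))) * indicator {..<a} r = (0::ennreal)"
        by (auto simp: indicator_def)
      then have "(\<integral>\<^sup>+r. J * (indicator {0<..} r * ennreal (real k * r^(k-1))) * indicator {..<a} r \<partial>lborel) = 0"
        by (simp only: nn_integral_0_iff_AE) simp
      with False show ?thesis by simp
    qed
    finally show ?thesis .
  qed
  have eq: "\<nu> = \<mu>"
  proof (rule measure_eqI_generator_eq_countable[where E="range lessThan" and \<Omega>=UNIV and A="range (\<lambda>m::nat. {..<real m})"])
    show "Int_stable (range lessThan :: real set set)"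
    proof (clarsimp simp: Int_stable_def)
      fix a b :: real
      have "{..<a} \<inter> {..<b} = {..<min a b}" by auto
      then show "{..<a} \<inter> {..<b} \<in> range lessThan" by blast
    qed
    show "range lessThan \<subseteq> Pow (UNIV :: real set)" by simp
    show "\<And>X. X \<in> range lessThan \<Longrightarrow> emeasure \<nu> X = emeasure \<mu> X"
      using \<nu>lt \<mu>lt by auto
    show "sets \<nu> = sigma_sets UNIV (range lessThan)" unfolding \<nu>_def by (simp add: sets_borel_Iio)
    show "sets \<mu> = sigma_sets UNIV (range lessThan)" unfolding \<mu>_def by (simp add: sets_borel_Iio)
    show "range (\<lambda>m::nat. {..<real m}) \<subseteq> range lessThan" by auto
    show "\<Union> (range (\<lambda>m::nat. {..<real m})) = UNIV"
      by (auto intro: reals_Archimedean2)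
    show "countable (range (\<lambda>m::nat. {..<real m}))" by simp
    show "\<And>X. X \<in> range (\<lambda>m::nat. {..<real m}) \<Longrightarrow> emeasure \<nu> X \<noteq> \<infinity>"
      using \<nu>lt fin unfolding J_def[symmetric] by (auto simp: ennreal_mult_eq_top_iff split: if_splits)
  qed
  have "(\<integral>\<^sup>+x. g x * \<psi> (norm2k k x) \<partial>lebk k) = (\<integral>\<^sup>+r. \<psi> r \<partial>\<nu>)"
    unfolding \<nu>_def by (subst nn_integral_distr[OF nmeas]) (auto simp: nn_integral_density)
  also have "\<dots> = (\<integral>\<^sup>+r. \<psi> r \<partial>\<mu>)" by (simp add: eq)
  also have "\<dots> = (\<integral>\<^sup>+r. J * (\<psi> r * (indicator {0<..} r * ennreal (real k * r^(k-1)))) \<partial>lborel)"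
    unfolding \<mu>_def by (subst nn_integral_density) (auto simp: mult_ac)
  also have "\<dots> = J * (\<integral>\<^sup>+r. \<psi> r * (indicator {0<..} r * ennreal (real k * r^(k-1))) \<partial>lborel)"
    by (subst nn_integral_cmult) auto
  finally show ?thesis unfolding J_def .
qed


abbreviation "SN \<equiv> density lborel (\<lambda>x. ennreal (std_normal_density x))"

lemma prob_SN: "prob_space SN"
  using prob_space_normal_density[where \<sigma>=1 and \<mu>=0] by simp

lemma PD: "PiM {..<k} (\<lambda>_. SN) = density (lebk k) (\<lambda>x. \<Prod>i<k. ennreal (std_normal_density (x i)))"
proof (rule measure_eqI_PiM_finite[where I="{..<k}" and M="\<lambda>_. lborel"])
  interpret product_sigma_finite "\<lambda>_::nat. SN"
    using prob_SN by (simp add: product_sigma_finite_def prob_space_imp_sigma_finite)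
  interpret L: product_sigma_finite "\<lambda>_::nat. lborel::real measure" by (rule psf_lborel)
  show "finite {..<k}" by simp
  show "sets (PiM {..<k} (\<lambda>_. SN)) = sets (lebk k)" by (intro sets_PiM_cong) auto
  show "sets (density (lebk k) (\<lambda>x. \<Prod>i<k. ennreal (std_normal_density (x i)))) = sets (lebk k)" by simp
  fix A :: "nat \<Rightarrow> real set" assume A: "\<And>i. i \<in> {..<k} \<Longrightarrow> A i \<in> sets lborel"
  have "emeasure (PiM {..<k} (\<lambda>_. SN)) (Pi\<^sub>E {..<k} A) = (\<Prod>i<k. emeasure SN (A i))"
    using A by (subst emeasure_PiM) auto
  also have "\<dots> = (\<Prod>i<k. \<integral>\<^sup>+y. ennreal (std_normal_density y) * indicator (A i) y \<partial>lborel)"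
    using A by (intro prod.cong refl) (simp add: emeasure_density)
  also have "\<dots> = (\<integral>\<^sup>+x. (\<Prod>i<k. ennreal (std_normal_density (x i)) * indicator (A i) (x i)) \<partial>lebk k)"
    using A by (subst L.product_nn_integral_prod) auto
  also have "\<dots> = (\<integral>\<^sup>+x. (\<Prod>i<k. ennreal (std_normal_density (x i))) * indicator (Pi\<^sub>E {..<k} A) x \<partial>lebk k)"
  proof (rule nn_integral_cong)
    fix x assume x: "x \<in> space (lebk k)"
    show "(\<Prod>i<k. ennreal (std_normal_density (x i)) * indicator (A i) (x i)) =
        (\<Prod>i<k. ennreal (std_normal_density (x i))) * indicator (Pi\<^sub>E {..<k} A) x"
    proof (cases "x \<in> Pi\<^sub>E {..<k} A")
      case True then show ?thesis by (auto simp: prod.distrib PiE_iff intro!: prod.cong)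
    next
      case False
      with x obtain j where j: "j < k" "x j \<notin> A j" by (auto simp: space_PiM PiE_iff)
      then have "(\<Prod>i<k. ennreal (std_normal_density (x i)) * indicator (A i) (x i)) = 0"
        by (intro prod_zero bexI[of _ j]) auto
      with False show ?thesis by simp
    qed
  qed
  also have "\<dots> = emeasure (density (lebk k) (\<lambda>x. \<Prod>i<k. ennreal (std_normal_density (x i)))) (Pi\<^sub>E {..<k} A)"
    using A by (subst emeasure_density) (auto intro!: sets_PiM_I_finite)
  finally show "emeasure (PiM {..<k} (\<lambda>_. SN)) (Pi\<^sub>E {..<k} A) =
      emeasure (density (lebk k) (\<lambda>x. \<Prod>i<k. ennreal (std_normal_density (x i)))) (Pi\<^sub>E {..<k} A)" .
next
  show "range (\<lambda>_::nat. Pi\<^sub>E {..<k} (\<lambda>_. UNIV::real set)) \<subseteq> prod_algebra {..<k} (\<lambda>_. lborel)"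
    by (auto intro!: prod_algebraI_finite)
  show "(\<Union>n::nat. Pi\<^sub>E {..<k} (\<lambda>_. UNIV::real set)) = space (lebk k)" by (simp add: space_PiM)
  interpret P: prob_space "PiM {..<k} (\<lambda>_. SN)" by (rule prob_space_PiM) (rule prob_SN)
  show "emeasure (PiM {..<k} (\<lambda>_. SN)) (Pi\<^sub>E {..<k} (\<lambda>_. UNIV)) \<noteq> \<infinity>" for n::nat
    by simp
qed


lemma psp_SN: "product_prob_space (\<lambda>_::nat. SN)"
  using prob_SN by (simp add: product_prob_space_def product_sigma_finite_def prob_space_imp_sigma_finite
     product_prob_space_axioms_def)

lemma gauss_abs:
  fixes v :: "nat \<Rightarrow> real"
  shows "(\<integral>\<^sup>+x. (\<Prod>i<k. ennreal (std_normal_density (x i))) * ennreal \<bar>dotk k v x\<bar> \<partial>lebk k)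
        = ennreal (norm2k k v * sqrt (2/pi))"
proof -
  let ?P = "PiM {..<k} (\<lambda>_. SN)"
  interpret P: prob_space ?P by (rule prob_space_PiM) (rule prob_SN)
  interpret PP: product_prob_space "\<lambda>_::nat. SN" by (rule psp_SN)
  have "(\<integral>\<^sup>+x. (\<Prod>i<k. ennreal (std_normal_density (x i))) * ennreal \<bar>dotk k v x\<bar> \<partial>lebk k)
      = (\<integral>\<^sup>+x. ennreal \<bar>dotk k v x\<bar> \<partial>?P)"
  proof -
    have dm: "(\<lambda>x. ennreal \<bar>dotk k v x\<bar>) \<in> borel_measurable (lebk k)"
      unfolding dotk_def by (intro measurable_compose[OF _ measurable_ennreal] borel_measurable_abs
          borel_measurable_sum borel_measurable_times) (auto intro: comp_meas)
    show ?thesis unfolding PD using dm by (subst nn_integral_density) auto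
  qed
  also have "\<dots> = ennreal (norm2k k v * sqrt (2/pi))"
  proof (cases "{i\<in>{..<k}. v i \<noteq> 0} = {}")
    case True
    then have "dotk k v x = 0" for x unfolding dotk_def by (intro sum.neutral) auto
    moreover have "norm2k k v = 0" using True unfolding norm2k_def by (subst sum.neutral) auto
    ultimately show ?thesis by simp
  next
    case False
    define J where "J = {i\<in>{..<k}. v i \<noteq> 0}"
    have J: "J \<noteq> {}" "finite J" "J \<subseteq> {..<k}" using False unfolding J_def by auto
    define X where "X i = (if i < k then (\<lambda>x::nat\<Rightarrow>real. x i) else (\<lambda>_. 0))" for i
    have Xm: "X i \<in> ?P \<rightarrow>\<^sub>M borel" for i
    proof (cases "i < k")
      case True
      have "(\<lambda>x. x i) \<in> ?P \<rightarrow>\<^sub>M SN" using True by (intro measurable_component_singleton) auto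
      also have "?P \<rightarrow>\<^sub>M SN = ?P \<rightarrow>\<^sub>M (borel::real measure)" by (rule measurable_cong_sets) auto
      finally show ?thesis using True unfolding X_def by simp
    qed (simp add: X_def)
    have XSN: "distr ?P borel (X i) = SN" if "i < k" for i
    proof -
      have "distr ?P borel (X i) = distr ?P SN (\<lambda>x. x i)"
        using that by (intro distr_cong) (auto simp: X_def)
      also have "\<dots> = SN" using that prob_SN by (intro distr_PiM_component) auto
      finally show ?thesis .
    qed
    have ind: "P.indep_vars (\<lambda>_. borel) X J"
    proof (subst P.indep_vars_iff_distr_eq_PiM[OF J(1) Xm])
      have "distr ?P (PiM J (\<lambda>_. borel)) (\<lambda>x. \<lambda>i\<in>J. X i x) = distr ?P (PiM J (\<lambda>_. SN)) (\<lambda>x. restrict x J)"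
      proof (rule distr_cong)
        show "sets (PiM J (\<lambda>_. borel)) = sets (PiM J (\<lambda>_. SN))" by (rule sets_PiM_cong) auto
        fix x assume "x \<in> space ?P"
        show "(\<lambda>i\<in>J. X i x) = restrict x J" using J(3) by (intro restrict_ext) (auto simp: X_def)
      qed simp
      also have "\<dots> = PiM J (\<lambda>_. SN)" using J by (intro PP.distr_restrict[symmetric]) auto
      also have "\<dots> = PiM J (\<lambda>i. distr ?P borel (X i))"
        by (rule PiM_cong[OF refl]) (metis XSN J(3) lessThan_iff subsetD)
      finally show "distr ?P (PiM J (\<lambda>_. borel)) (\<lambda>x. \<lambda>i\<in>J. X i x) = PiM J (\<lambda>i. distr ?P borel (X i))" .
    qed
    have ind2: "P.indep_vars (\<lambda>_. borel) (\<lambda>i x. v i * X i x) J"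
      using P.indep_vars_compose2[OF ind, of "\<lambda>i y. v i * y" "\<lambda>_. borel"] by simp
    have dX: "distributed ?P lborel (X i) (normal_density 0 1)" if "i < k" for i
      unfolding distributed_def using XSN[OF that] Xm[of i] by (auto simp: distr_cong[OF refl, of lborel borel])
    have dX2: "distributed ?P lborel (\<lambda>x. v i * X i x) (normal_density 0 \<bar>v i\<bar>)" if "i \<in> J" for i
      using P.normal_density_affine[OF dX[of i], of "v i" 0] that by (auto simp: J_def)
    have dsum: "distributed ?P lborel (\<lambda>x. \<Sum>i\<in>J. v i * X i x)
        (normal_density (\<Sum>i\<in>J. 0) (sqrt (\<Sum>i\<in>J. \<bar>v i\<bar>\<^sup>2)))"
      using P.sum_indep_normal[where I=J and X="\<lambda>i x. v i * X i x" and \<sigma>="\<lambda>i. \<bar>v i\<bar>" and \<mu>="\<lambda>_. 0"]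
        J ind2 dX2 by (simp add: J_def)
    have "(\<Sum>i\<in>J. \<bar>v i\<bar>\<^sup>2) = (\<Sum>i\<in>J. (v i)\<^sup>2)" by simp
    also have "\<dots> = (\<Sum>i<k. (v i)\<^sup>2)" unfolding J_def by (intro sum.mono_neutral_left) auto
    finally have nv: "sqrt (\<Sum>i\<in>J. \<bar>v i\<bar>\<^sup>2) = norm2k k v" unfolding norm2k_def by simp
    have nvpos: "norm2k k v > 0"
    proof -
      obtain j where "j \<in> J" using J by auto
      then have "0 < (\<Sum>i\<in>J. \<bar>v i\<bar>\<^sup>2)" using J by (intro sum_pos2[where i=j]) (auto simp: J_def)
      then show ?thesis using nv by (metis real_sqrt_gt_0_iff)
    qed
    have dsum': "distributed ?P lborel (\<lambda>x. \<Sum>i\<in>J. v i * X i x) (normal_density 0 (norm2k k v))"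
      using dsum nv by simp
    have "(\<integral>\<^sup>+x. ennreal \<bar>dotk k v x\<bar> \<partial>?P) = (\<integral>\<^sup>+x. ennreal \<bar>\<Sum>i\<in>J. v i * X i x\<bar> \<partial>?P)"
    proof (rule nn_integral_cong)
      fix x assume "x \<in> space ?P"
      have "(\<Sum>i\<in>J. v i * X i x) = (\<Sum>i\<in>J. v i * x i)"
        using J by (intro sum.cong) (auto simp: X_def)
      also have "\<dots> = dotk k v x"
        unfolding dotk_def J_def by (intro sum.mono_neutral_left) auto
      finally have "dotk k v x = (\<Sum>i\<in>J. v i * X i x)" ..
      then show "ennreal \<bar>dotk k v x\<bar> = ennreal \<bar>\<Sum>i\<in>J. v i * X i x\<bar>" by simp
    qed
    also have "\<dots> = (\<integral>\<^sup>+y. ennreal (normal_density 0 (norm2k k v) y) * ennreal \<bar>y\<bar> \<partial>lborel)"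
      by (subst distributed_nn_integral[OF dsum', of "\<lambda>y. ennreal \<bar>y\<bar>"]) auto
    also have "\<dots> = (\<integral>\<^sup>+y. ennreal (normal_density 0 (norm2k k v) y * \<bar>y - 0\<bar>^(2*0+1)) \<partial>lborel)"
      by (intro nn_integral_cong) (simp add: ennreal_mult)
    also have "\<dots> = ennreal (2^0 * (norm2k k v)^(2*0+1) * fact 0 * sqrt (2/pi))"
      using normal_moment_abs_odd[OF nvpos, of 0 0]
      by (subst nn_integral_eq_integral) (auto simp: has_bochner_integral_iff)
    finally show ?thesis by simp
  qed
  finally show ?thesis .
qed

lemma gauss_one:
  shows "(\<integral>\<^sup>+x. (\<Prod>i<k. ennreal (std_normal_density (x i))) \<partial>lebk k) = 1"
proof -
  interpret P: prob_space "PiM {..<k} (\<lambda>_. SN)" by (rule prob_space_PiM) (rule prob_SN)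
  have "(\<integral>\<^sup>+x. (\<Prod>i<k. ennreal (std_normal_density (x i))) \<partial>lebk k)
      = emeasure (density (lebk k) (\<lambda>x. \<Prod>i<k. ennreal (std_normal_density (x i)))) (space (lebk k))"
    by (subst emeasure_density) (auto intro!: nn_integral_cong)
  also have "\<dots> = emeasure (PiM {..<k} (\<lambda>_. SN)) (space (PiM {..<k} (\<lambda>_. SN)))"
    unfolding PD[symmetric] by (simp add: space_PiM)
  finally show ?thesis by (simp add: P.emeasure_space_1)
qed


definition Mom :: "nat \<Rightarrow> real" where
  "Mom j = integral\<^sup>L lborel (\<lambda>x. std_normal_density x * \<bar>x\<bar>^j)"

lemma Mom_even: "Mom (2*i) = fact (2*i) / (2^i * fact i)"
proof -
  have "Mom (2*i) = integral\<^sup>L lborel (\<lambda>x. std_normal_density x * x^(2*i))"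
    unfolding Mom_def by (simp add: power_even_abs)
  then show ?thesis by (simp add: integral_std_normal_moment_even)
qed

lemma Mom_odd: "Mom (2*i+1) = sqrt (2/pi) * 2^i * fact i"
  unfolding Mom_def by (rule integral_std_normal_moment_abs_odd)

lemma fact2: "(fact (2*i+2) :: real) = (2*real i+2)*(2*real i+1)*fact (2*i)"
proof -
  have "(fact (2*i+2) :: real) = fact (Suc (Suc (2*i)))" by (simp add: numeral_2_eq_2)
  also have "\<dots> = (2*real i+2)*(2*real i+1)*fact (2*i)" by (simp add: fact_Suc algebra_simps)
  finally show ?thesis .
qed

lemma Mom_rec: "Mom (j+2) = real (j+1) * Mom j"
proof (cases "even j")
  case True
  then obtain i where j: "j = 2*i" by (auto elim: evenE)
  have e1: "Mom (2*(i+1)) = fact (2*(i+1)) / (2^(i+1) * fact (i+1))" by (rule Mom_even)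
  have e0: "Mom (2*i) = fact (2*i) / (2^i * fact i)" by (rule Mom_even)
  have jj: "j + 2 = 2*(i+1)" "2*(i+1) = 2*i+2" using j by simp_all
  have "Mom (j+2) = fact (2*i+2) / (2^(i+1) * fact (i+1))" using e1 by (simp only: jj)
  also have "\<dots> = (2*real i+2)*(2*real i+1)*fact (2*i) / (2 * 2^i * ((real i + 1) * fact i))"
    by (simp only: fact2 fact_Suc power_Suc Suc_eq_plus1 of_nat_add of_nat_1 flip: Suc_eq_plus1) simp
  also have "\<dots> = (2*real i+1)*(fact (2*i) / (2^i * fact i))"
  proof -
    have gen: "(2*x+2)*(2*x+1)*F / (2*A*((x+1)*f)) = (2*x+1)*(F/(A*f))"
      if "A > 0" "f > 0" "x \<ge> 0" for x A f F :: real
    proof -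
      have "(2*x+2)*(2*x+1)*F / (2*A*((x+1)*f)) = ((2*(x+1)) * ((2*x+1)*F)) / ((2*(x+1)) * (A*f))"
        by (simp add: algebra_simps)
      also have "\<dots> = ((2*x+1)*F) / (A*f)" using that by (subst mult_divide_mult_cancel_left) auto
      finally show ?thesis by simp
    qed
    show ?thesis by (rule gen) auto
  qed
  also have "\<dots> = real (j+1) * Mom j"
    using j e0 by simp
  finally show ?thesis .
next
  case False
  then obtain i where j: "j = 2*i+1" by (auto elim: oddE)
  have e1: "Mom (2*(i+1)+1) = sqrt (2/pi) * 2^(i+1) * fact (i+1)" by (rule Mom_odd)
  have e0: "Mom (2*i+1) = sqrt (2/pi) * 2^i * fact i" by (rule Mom_odd)
  have jj: "j + 2 = 2*(i+1)+1" using j by simp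
  have "Mom (j+2) = sqrt (2/pi) * 2^(i+1) * fact (i+1)" using e1 by (simp only: jj)
  also have "\<dots> = real (j+1) * Mom j"
    using j e0 by (simp add: field_simps)
  finally show ?thesis .
qed

lemma Mom_pos: "Mom j > 0"
proof (cases "even j")
  case True
  then obtain i where j: "j = 2*i" by (auto elim: evenE)
  have e0: "Mom (2*i) = fact (2*i) / (2^i * fact i)" by (rule Mom_even)
  show ?thesis using j e0 by simp
next
  case False
  then obtain i where j: "j = 2*i+1" by (auto elim: oddE)
  have e0: "Mom (2*i+1) = sqrt (2/pi) * 2^i * fact i" by (rule Mom_odd)
  show ?thesis using j e0 by simp
qed

lemma Mom0: "Mom 0 = 1" using Mom_even[of 0] by simp
lemma Mom1: "Mom 1 = sqrt (2/pi)" using Mom_odd[of 0] by simp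
lemma Mom2: "Mom 2 = 1"
proof -
  have "Mom 2 = Mom (0+2)" by (simp add: numeral_2_eq_2)
  also have "\<dots> = real (0+1) * Mom 0" by (rule Mom_rec)
  finally show ?thesis by (simp add: Mom0)
qed

lemma Gamma_rec_pos: "x > 0 \<Longrightarrow> Gamma (x + 1) = x * Gamma (x::real)"
  by (rule Gamma_plus1) (auto dest: nonpos_Ints_nonpos)

lemma Pstep:
  assumes IH: "sqrt 2 * Mom m * Gamma ((real m + 2)/2) = Gamma ((real m+1)/2) * Mom (m+1)"
  shows "sqrt 2 * Mom (m+2) * Gamma ((real (m+2) + 2)/2) = Gamma ((real (m+2)+1)/2) * Mom (m+2+1)"
proof -
  have e1: "(real (m+2) + 2)/2 = (real m + 2)/2 + 1" by simp
  have e2: "(real (m+2) + 1)/2 = (real m + 1)/2 + 1" by simp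
  have e3: "m+2+1 = (m+1)+2" by simp
  have g1: "Gamma ((real m + 2)/2 + 1) = (real m + 2)/2 * Gamma ((real m+2)/2)" by (rule Gamma_rec_pos) simp
  have g2: "Gamma ((real m + 1)/2 + 1) = (real m + 1)/2 * Gamma ((real m+1)/2)" by (rule Gamma_rec_pos) simp
  have r1: "Mom (m+2) = real (m+1) * Mom m" by (rule Mom_rec)
  have r2: "Mom ((m+1)+2) = real (m+1+1) * Mom (m+1)" by (rule Mom_rec)
  have "sqrt 2 * Mom (m+2) * Gamma ((real (m+2) + 2)/2)
      = (real (m+1) * ((real m + 2)/2)) * (sqrt 2 * Mom m * Gamma ((real m + 2)/2))"
    unfolding e1 g1 r1 by (simp add: algebra_simps)
  also have "\<dots> = (real (m+1) * ((real m + 2)/2)) * (Gamma ((real m+1)/2) * Mom (m+1))" by (simp only: IH)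
  also have "\<dots> = Gamma ((real (m+2)+1)/2) * Mom (m+2+1)"
    unfolding e2 e3 g2 r2 by (simp add: algebra_simps)
  finally show ?thesis .
qed

lemma Mom_Gamma_all: "sqrt 2 * Mom m * Gamma ((real m + 2)/2) = Gamma ((real m+1)/2) * Mom (m+1)"
proof (induction m rule: nat_less_induct)
  case (1 n)
  show ?case
  proof (cases "n < 2")
    case True
    have sp: "sqrt pi * sqrt (2/pi) = sqrt 2"
      by (simp add: real_sqrt_mult[symmetric])
    have g32: "Gamma (3/2::real) = sqrt pi / 2"
      using Gamma_rec_pos[of "1/2"] by (simp add: Gamma_one_half_real)
    show ?thesis
    proof (cases "n = 0")
      case True
      have a: "sqrt 2 * Mom 0 * Gamma 1 = Gamma (1/2) * Mom 1"
        by (simp only: Mom0 Mom1 Gamma_one_half_real Gamma_1 sp mult_1_right)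
      then show ?thesis using True by simp
    next
      case False
      with True have n: "n = 1" by simp
      have b: "sqrt 2 * Mom 1 * Gamma (3/2) = Gamma 1 * Mom 2"
      proof -
        have "sqrt 2 * Mom 1 * Gamma (3/2) = (sqrt 2 * sqrt 2) * (sqrt pi * sqrt (2/pi)) / 2 / sqrt 2"
          by (simp only: Mom1 g32) (simp add: field_simps)
        also have "\<dots> = 1" by (simp only: sp) simp
        finally show ?thesis by (simp add: Mom2)
      qed
      have "(real 1 + 2)/2 = (3/2::real)" "(real 1 + 1)/2 = (1::real)" "(1::nat) + 1 = 2" by simp_all
      then show ?thesis using b n by (simp only:)
    qed
  next
    case False
    then obtain m where n: "n = m + 2" by (metis add.commute le_Suc_ex not_less)
    have "sqrt 2 * Mom m * Gamma ((real m + 2)/2) = Gamma ((real m+1)/2) * Mom (m+1)"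
      using 1 n by simp
    then show ?thesis unfolding n by (rule Pstep)
  qed
qed

lemma Mom_Gamma: "k \<ge> 1 \<Longrightarrow> sqrt 2 * Mom (k-1) * Gamma ((real k + 1)/2) = Gamma (real k/2) * Mom k"
proof -
  assume k: "k \<ge> 1"
  have e: "(real (k-1) + 2)/2 = (real k + 1)/2" "(real (k-1)+1)/2 = real k/2" "k-1+1 = k"
    using k by (simp_all add: of_nat_diff)
  from Mom_Gamma_all[of "k-1"] show ?thesis by (simp only: e)
qed

lemma Beta_Mom: assumes k: "k \<ge> 1"
  shows "sqrt (2/pi) * Mom (k-1) / Mom k = Beta (real k/2) (1/2) / pi"
proof -
  have gen: "r * (p / q) = a * s / (b * (s * s))" if "r * s = t" "t * p * b = a * q" "b > 0" "q > 0" "s > 0"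
    for r s t p q a b :: real
  proof -
    have "r * (p / q) = (t * p * b) / (q * b * s)" using that by (simp add: field_simps)
    also have "\<dots> = (a * q) / (q * b * s)" using that(2) by simp
    also have "\<dots> = a * s / (b * (s * s))" using that by (simp add: field_simps)
    finally show ?thesis .
  qed
  have B: "Beta (real k/2) (1/2) / pi = Gamma (real k/2) * sqrt pi / (Gamma ((real k + 1)/2) * (sqrt pi * sqrt pi))"
    unfolding Beta_def Gamma_one_half_real by (simp add: add_divide_distrib)
  have "sqrt (2/pi) * (Mom (k-1) / Mom k) = Gamma (real k/2) * sqrt pi / (Gamma ((real k + 1)/2) * (sqrt pi * sqrt pi))"
    by (rule gen[where t="sqrt 2"]) (use Mom_Gamma[OF k] Mom_pos[of k] k in \<open>auto simp: real_sqrt_divide\<close>)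
  then show ?thesis using B by simp
qed


lemma Gamma_half_shift: assumes a: "a > (0::real)" shows "Gamma (a + 1/2) \<le> sqrt a * Gamma a"
proof -
  have "(ln \<circ> Gamma) ((1 - 1/2) *\<^sub>R a + (1/2) *\<^sub>R (a+1)) \<le> (1 - 1/2) * (ln \<circ> Gamma) a + (1/2) * (ln \<circ> Gamma) (a+1)"
    using a by (intro convex_onD[OF log_convex_Gamma_real]) auto
  then have "ln (Gamma (a + 1/2)) \<le> (ln (Gamma a) + ln (Gamma (a+1))) / 2"
    by (simp add: algebra_simps add_divide_distrib)
  also have "\<dots> = ln (sqrt a * Gamma a)"
  proof -
    have "ln (Gamma (a+1)) = ln a + ln (Gamma a)" using Gamma_rec_pos[OF a] ln_mult_pos[OF a Gamma_real_pos[OF a]] by simp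
    moreover have "ln (sqrt a) = ln a / 2" using a by (simp add: ln_sqrt)
    moreover have "ln (sqrt a * Gamma a) = ln (sqrt a) + ln (Gamma a)"
      using a Gamma_real_pos[OF a] by (intro ln_mult_pos) auto
    ultimately show ?thesis by simp
  qed
  finally show ?thesis using a by (simp add: ln_le_cancel_iff)
qed

lemma Beta_pos: "k \<ge> 1 \<Longrightarrow> Beta (real k/2) (1/2) > 0"
  unfolding Beta_def by (auto intro!: divide_pos_pos mult_pos_pos)

lemma Beta_upper: assumes k: "k \<ge> 1" shows "pi / Beta (real k/2) (1/2) \<le> 2 * sqrt (real k)"
proof -
  define a where "a = real k / 2"
  have a: "a > 0" using k by (simp add: a_def)
  have "pi / Beta (real k/2) (1/2) = sqrt pi * (Gamma (a + 1/2) / Gamma a)"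
  proof -
    have "pi / Beta (real k/2) (1/2) = (pi / sqrt pi) * (Gamma (a + 1/2) / Gamma a)"
      unfolding Beta_def a_def by (simp add: Gamma_one_half_real add_divide_distrib)
    also have "pi / sqrt pi = sqrt pi" by (rule real_div_sqrt) simp
    finally show ?thesis .
  qed
  also have "\<dots> \<le> sqrt pi * sqrt a"
    using Gamma_half_shift[OF a] Gamma_real_pos[OF a] by (intro mult_left_mono) (auto simp: field_simps)
  also have "\<dots> = sqrt (pi / 2) * sqrt (real k)" unfolding a_def by (simp add: real_sqrt_mult[symmetric] real_sqrt_divide)
  also have "\<dots> \<le> 2 * sqrt (real k)"
  proof (intro mult_right_mono)
    have "pi / 2 \<le> 2^2" using pi_less_4 by simp
    then show "sqrt (pi/2) \<le> 2" by (metis real_sqrt_le_mono real_sqrt_pow2_iff abs_of_nonneg real_sqrt_abs zero_le_numeral)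
  qed auto
  finally show ?thesis .
qed

lemma half_moment:
  "(\<integral>\<^sup>+r. ennreal (r^j * exp (-r\<^sup>2/2)) * indicator {0<..} r \<partial>lborel) = ennreal (sqrt (2*pi) / 2 * Mom j)"
proof -
  define f where "f r = \<bar>r\<bar>^j * exp (-r\<^sup>2/2)" for r :: real
  have fm[measurable]: "f \<in> borel_measurable borel" unfolding f_def by measurable
  have full: "(\<integral>\<^sup>+r. ennreal (f r) \<partial>lborel) = ennreal (sqrt (2*pi) * Mom j)"
  proof -
    have "(\<integral>\<^sup>+r. ennreal (f r) \<partial>lborel) = (\<integral>\<^sup>+r. ennreal (sqrt (2*pi)) * ennreal (std_normal_density r * \<bar>r\<bar>^j) \<partial>lborel)"
      by (intro nn_integral_cong) (simp add: f_def std_normal_density_def ennreal_mult[symmetric] field_simps)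
    also have "\<dots> = ennreal (sqrt (2*pi)) * (\<integral>\<^sup>+r. ennreal (std_normal_density r * \<bar>r\<bar>^j) \<partial>lborel)"
      by (subst nn_integral_cmult) auto
    also have "(\<integral>\<^sup>+r. ennreal (std_normal_density r * \<bar>r\<bar>^j) \<partial>lborel) = ennreal (Mom j)"
      unfolding Mom_def by (subst nn_integral_eq_integral) (auto intro: integrable_std_normal_moment_abs)
    finally show ?thesis using Mom_pos[of j] by (simp add: ennreal_mult[symmetric] less_imp_le)
  qed
  have split: "(\<integral>\<^sup>+r. ennreal (f r) \<partial>lborel) = (\<integral>\<^sup>+r. ennreal (f r) * indicator {0<..} r \<partial>lborel) + (\<integral>\<^sup>+r. ennreal (f r) * indicator {..0} r \<partial>lborel)"
    by (subst nn_integral_add[symmetric]) (auto intro!: nn_integral_cong simp: indicator_def)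
  have refl: "(\<integral>\<^sup>+r. ennreal (f r) * indicator {..0} r \<partial>lborel) = (\<integral>\<^sup>+r. ennreal (f r) * indicator {0<..} r \<partial>lborel)"
  proof -
    have "(\<integral>\<^sup>+r. ennreal (f r) * indicator {..0} r \<partial>lborel) = ennreal \<bar>-1\<bar> * (\<integral>\<^sup>+r. ennreal (f (0 + -1 * r)) * indicator {..0} (0 + -1*r) \<partial>lborel)"
      by (rule nn_integral_real_affine) auto
    also have "\<dots> = (\<integral>\<^sup>+r. ennreal (f r) * indicator {0..} r \<partial>lborel)"
      by (auto intro!: nn_integral_cong simp: f_def indicator_def)
    also have "\<dots> = (\<integral>\<^sup>+r. ennreal (f r) * indicator {0<..} r \<partial>lborel)"
      by (intro nn_integral_cong_AE) (use AE_lborel_singleton[of 0] in \<open>eventually_elim, auto simp: indicator_def\<close>)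
    finally show ?thesis .
  qed
  have eq: "(\<integral>\<^sup>+r. ennreal (r^j * exp (-r\<^sup>2/2)) * indicator {0<..} r \<partial>lborel) = (\<integral>\<^sup>+r. ennreal (f r) * indicator {0<..} r \<partial>lborel)"
    by (intro nn_integral_cong) (auto simp: f_def indicator_def)
  have "2 * (\<integral>\<^sup>+r. ennreal (f r) * indicator {0<..} r \<partial>lborel) = (\<integral>\<^sup>+r. ennreal (f r) * indicator {0<..} r \<partial>lborel) + (\<integral>\<^sup>+r. ennreal (f r) * indicator {0<..} r \<partial>lborel)"
    by (rule mult_2)
  also have "\<dots> = ennreal (sqrt (2*pi) * Mom j)" using full split refl by (simp only:)
  also have "ennreal (sqrt (2*pi) * Mom j) = 2 * ennreal (sqrt (2*pi) / 2 * Mom j)"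
  proof -
    define y where "y = sqrt (2*pi) / 2 * Mom j"
    have y0: "0 \<le> y" using Mom_pos[of j] by (simp add: y_def)
    have e: "sqrt (2*pi) * Mom j = 2 * y" by (simp add: y_def)
    have "ennreal (2 * y) = ennreal 2 * ennreal y" using y0 by (rule ennreal_mult[rotated]) simp
    then show ?thesis unfolding e y_def[symmetric] by simp

  qed
  finally have "(\<integral>\<^sup>+r. ennreal (f r) * indicator {0<..} r \<partial>lborel) = ennreal (sqrt (2*pi) / 2 * Mom j)"
    by (subst (asm) ennreal_mult_cancel_left) auto
  then show ?thesis using eq by simp
qed


lemma Max_ins0_eqI:
  fixes S :: "real set"
  assumes "finite S" "m \<in> insert 0 S" "\<And>s. s \<in> S \<Longrightarrow> s \<le> m" "0 \<le> m"
  shows "Max (insert 0 S) = m"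
  using assms by (intro Max_eqI) auto

lemma Max_ins0_le:
  fixes S :: "real set"
  assumes "finite S" "\<And>s. s \<in> S \<Longrightarrow> s \<le> m" "0 \<le> m"
  shows "Max (insert 0 S) \<le> m"
  using assms by (subst Max_le_iff) auto

lemma Max_ins0_ge:
  fixes S :: "real set"
  assumes "finite S" "s \<in> S"
  shows "s \<le> Max (insert 0 S)"
  using assms by (intro Max_ge) auto

lemma Max_ins0_nonneg:
  fixes S :: "real set"
  assumes "finite S"
  shows "0 \<le> Max (insert 0 S)"
  using assms by (intro Max_ge) auto

lemma fin_pairs: "finite A \<Longrightarrow> finite {f a b | a b. a \<in> A \<and> b \<in> A}"
proof -
  assume "finite A"
  moreover have "{f a b | a b. a \<in> A \<and> b \<in> A} = (\<lambda>(a,b). f a b) ` (A \<times> A)" by auto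
  ultimately show ?thesis by simp
qed

lemma dotk_diff: "dotk k (\<lambda>i. a i - b i) u = dotk k a u - dotk k b u"
  unfolding dotk_def by (simp add: left_diff_distrib sum_subtractf)

lemma dotk_conv:
  "dotk k (\<lambda>i. \<Sum>a\<in>A. c a * a i) u = (\<Sum>a\<in>A. c a * dotk k a u)"
  unfolding dotk_def by (simp add: sum_distrib_right sum_distrib_left mult.assoc sum.swap[of _ "{..<k}"])

lemma cauchy_dotk: "\<bar>dotk k a u\<bar> \<le> norm2k k a * norm2k k u"
proof -
  have "(dotk k a u)\<^sup>2 \<le> (\<Sum>i<k. (a i)\<^sup>2) * (\<Sum>i<k. (u i)\<^sup>2)"
    unfolding dotk_def by (rule Cauchy_Schwarz_ineq_sum)
  then have "sqrt ((dotk k a u)\<^sup>2) \<le> sqrt ((\<Sum>i<k. (a i)\<^sup>2) * (\<Sum>i<k. (u i)\<^sup>2))"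
    by (rule real_sqrt_le_mono)
  then show ?thesis unfolding norm2k_def by (simp add: real_sqrt_mult)
qed

lemma width_eq:
  assumes A: "finite A" "A \<noteq> {}"
  shows "width k (convk A) u = Max ((\<lambda>a. dotk k a u) ` A) - Min ((\<lambda>a. dotk k a u) ` A)"
proof -
  let ?d = "\<lambda>a. dotk k a u"
  have in_conv: "a \<in> convk A" if "a \<in> A" for a
  proof -
    let ?c = "\<lambda>b. if b = a then 1 else (0::real)"
    have "(\<Sum>b\<in>A. ?c b * b i) = a i" for i
    proof -
      have "(\<Sum>b\<in>A. ?c b * b i) = (\<Sum>b\<in>A. if b = a then a i else 0)" by (rule sum.cong) auto
      also have "\<dots> = a i" using that A by (simp add: sum.delta)
      finally show ?thesis .
    qed
    then have "(\<lambda>i. \<Sum>b\<in>A. ?c b * b i) = a" by auto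
    moreover have "(\<Sum>b\<in>A. ?c b) = 1" using that A by (simp add: sum.delta)
    ultimately show ?thesis unfolding convk_def by (auto intro!: exI[of _ ?c])
  qed
  have conv_bd: "Min (?d ` A) \<le> ?d p \<and> ?d p \<le> Max (?d ` A)" if "p \<in> convk A" for p
  proof -
    from that obtain c where c: "p = (\<lambda>i. \<Sum>a\<in>A. c a * a i)" "\<forall>a\<in>A. 0 \<le> c a" "(\<Sum>a\<in>A. c a) = 1"
      unfolding convk_def by auto
    have dp: "?d p = (\<Sum>a\<in>A. c a * ?d a)" unfolding c(1) by (rule dotk_conv)
    have "(\<Sum>a\<in>A. c a * ?d a) \<le> (\<Sum>a\<in>A. c a * Max (?d ` A))"
      using c A by (intro sum_mono mult_left_mono) auto
    also have "\<dots> = Max (?d ` A)" using c by (simp add: sum_distrib_right[symmetric])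
    finally have 1: "?d p \<le> Max (?d ` A)" using dp by simp
    have "(\<Sum>a\<in>A. c a * Min (?d ` A)) \<le> (\<Sum>a\<in>A. c a * ?d a)"
      using c A by (intro sum_mono mult_left_mono) auto
    moreover have "(\<Sum>a\<in>A. c a * Min (?d ` A)) = Min (?d ` A)" using c by (simp add: sum_distrib_right[symmetric])
    ultimately have 2: "Min (?d ` A) \<le> ?d p" using dp by simp
    show ?thesis using 1 2 by simp
  qed
  have fin: "finite (?d ` A)" "?d ` A \<noteq> {}" using A by auto
  obtain a0 where a0: "a0 \<in> A" "?d a0 = Max (?d ` A)" using Max_in[OF fin] by auto
  obtain b0 where b0: "b0 \<in> A" "?d b0 = Min (?d ` A)" using Min_in[OF fin] by auto
  have "Sup (?d ` convk A) = Max (?d ` A)"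
    by (rule cSup_eq_maximum) (use a0 in_conv conv_bd in \<open>auto intro!: image_eqI[of _ _ a0]\<close>)
  moreover have "Inf (?d ` convk A) = Min (?d ` A)"
    by (rule cInf_eq_minimum) (use b0 in_conv conv_bd in \<open>auto intro!: image_eqI[of _ _ b0]\<close>)
  ultimately show ?thesis unfolding width_def by simp
qed

lemma width_ge:
  assumes A: "finite A" "a \<in> A" "b \<in> A"
  shows "dotk k a u - dotk k b u \<le> width k (convk A) u"
proof -
  have "A \<noteq> {}" using A by auto
  then show ?thesis unfolding width_eq[OF A(1) \<open>A \<noteq> {}\<close>]
    using A by (intro diff_mono Max_ge Min_le) auto
qed

lemma width_ge_abs:
  assumes A: "finite A" "a \<in> A" "b \<in> A"
  shows "\<bar>dotk k (\<lambda>i. a i - b i) u\<bar> \<le> width k (convk A) u"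
  using width_ge[OF A, of k u] width_ge[OF A(1) A(3) A(2), of k u] by (simp add: dotk_diff)

lemma width_nonneg:
  assumes A: "finite A" "A \<noteq> {}" shows "0 \<le> width k (convk A) u"
  using A width_ge[OF A(1), of _ _ k u] by fastforce

lemma diam2_ge: "finite A \<Longrightarrow> a \<in> A \<Longrightarrow> b \<in> A \<Longrightarrow> norm2k k (\<lambda>i. a i - b i) \<le> diam2 k A"
  unfolding diam2_def by (rule Max_ins0_ge) (auto intro: fin_pairs)

lemma diam2_nonneg: "finite A \<Longrightarrow> 0 \<le> diam2 k A"
  unfolding diam2_def by (rule Max_ins0_nonneg) (auto intro: fin_pairs)

lemma width_le:
  assumes A: "finite A" "A \<noteq> {}" and u: "norm2k k u \<le> 1"
  shows "width k (convk A) u \<le> diam2 k A"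
proof -
  let ?d = "\<lambda>a. dotk k a u"
  have fin: "finite (?d ` A)" "?d ` A \<noteq> {}" using A by auto
  obtain a0 where a0: "a0 \<in> A" "?d a0 = Max (?d ` A)" using Max_in[OF fin] by auto
  obtain b0 where b0: "b0 \<in> A" "?d b0 = Min (?d ` A)" using Min_in[OF fin] by auto
  have "width k (convk A) u = dotk k (\<lambda>i. a0 i - b0 i) u"
    unfolding width_eq[OF A] dotk_diff a0(2)[symmetric] b0(2)[symmetric] ..
  also have "\<dots> \<le> norm2k k (\<lambda>i. a0 i - b0 i) * norm2k k u"
    using cauchy_dotk by (rule abs_le_D1)
  also have "\<dots> \<le> norm2k k (\<lambda>i. a0 i - b0 i) * 1"
    using u by (intro mult_left_mono) (auto simp: norm2k_def intro!: sum_nonneg)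
  also have "\<dots> \<le> diam2 k A" using diam2_ge[OF A(1) a0(1) b0(1)] by simp
  finally show ?thesis .
qed

definition e_vec :: "nat \<Rightarrow> nat \<Rightarrow> real" where "e_vec i = (\<lambda>j. if j = i then 1 else 0)"


lemma ball_sets[measurable]: "unit_ballk k \<in> sets (lebk k)"
  unfolding unit_ballk_def by measurable

lemma ball_sub_box: "unit_ballk k \<subseteq> Pi\<^sub>E {..<k} (\<lambda>_. {-1..1})"
proof
  fix x assume x: "x \<in> unit_ballk k"
  then have sp: "x \<in> space (lebk k)" and n: "norm2k k x < 1" by (auto simp: unit_ballk_def)
  have "\<bar>x i\<bar> \<le> 1" if "i < k" for i
  proof -
    have "(x i)\<^sup>2 \<le> (\<Sum>j<k. (x j)\<^sup>2)" using that by (intro member_le_sum) auto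
    also have "\<dots> = (norm2k k x)\<^sup>2" unfolding norm2k_def by (simp add: sum_nonneg)
    also have "\<dots> \<le> 1" using n norm2k_nonneg[of k x] by (simp add: power_le_one)
    finally show ?thesis by (simp add: abs_square_le_1)
  qed
  then show "x \<in> Pi\<^sub>E {..<k} (\<lambda>_. {-1..1})" using sp by (auto simp: space_PiM PiE_iff abs_le_iff)
qed

lemma ball_fin: "emeasure (lebk k) (unit_ballk k) < \<infinity>"
proof -
  interpret L: product_sigma_finite "\<lambda>_::nat. lborel::real measure" by (rule psf_lborel)
  have "emeasure (lebk k) (unit_ballk k) \<le> emeasure (lebk k) (Pi\<^sub>E {..<k} (\<lambda>_. {-1..1}))"
    by (intro emeasure_mono ball_sub_box) (auto intro!: sets_PiM_I_finite)
  also have "\<dots> = (\<Prod>i<k. emeasure lborel {-1..1::real})" by (subst L.emeasure_PiM) auto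
  also have "\<dots> < \<infinity>" by (simp add: power_less_top_ennreal)
  finally show ?thesis .
qed

lemma prod_sn: "(\<Prod>i<k. std_normal_density (x i)) = (1/sqrt(2*pi))^k * exp (-(norm2k k x)\<^sup>2/2)"
proof -
  have "(\<Prod>i<k. std_normal_density (x i)) = (\<Prod>i<k. (1/sqrt(2*pi)) * exp (-(x i)\<^sup>2/2))"
    by (simp add: std_normal_density_def)
  also have "\<dots> = (1/sqrt(2*pi))^k * (\<Prod>i<k. exp (-(x i)\<^sup>2/2))" by (simp only: prod.distrib prod_constant card_lessThan)
  also have "(\<Prod>i<k. exp (-(x i)\<^sup>2/2)) = exp (\<Sum>i<k. -(x i)\<^sup>2/2)" by (simp add: exp_sum)
  also have "(\<Sum>i<k. -(x i)\<^sup>2/2) = -(norm2k k x)\<^sup>2/2"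
    unfolding norm2k_def by (simp add: sum_nonneg sum_negf sum_divide_distrib[symmetric])
  finally show ?thesis .
qed

definition Kc :: "nat \<Rightarrow> nat \<Rightarrow> real" where
  "Kc k j = (1/sqrt(2*pi))^k * real k * (sqrt (2*pi) / 2 * Mom j)"

lemma Kc_pos: "k \<ge> 1 \<Longrightarrow> Kc k j > 0"
  unfolding Kc_def using Mom_pos[of j] by (auto intro!: mult_pos_pos)

lemma radial_int:
  assumes "c \<ge> 0" and k1: "k \<ge> 1"
  shows "(\<integral>\<^sup>+r. ennreal (c * r^m * exp (-r\<^sup>2/2)) * (indicator {0<..} r * ennreal (real k * r^(k-1))) \<partial>lborel)
     = ennreal (c * real k * (sqrt (2*pi) / 2 * Mom (m+k-1)))"
proof -
  have "(\<integral>\<^sup>+r. ennreal (c * r^m * exp (-r\<^sup>2/2)) * (indicator {0<..} r * ennreal (real k * r^(k-1))) \<partial>lborel)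
      = (\<integral>\<^sup>+r. ennreal (c * real k) * (ennreal (r^(m+k-1) * exp (-r\<^sup>2/2)) * indicator {0<..} r) \<partial>lborel)"
  proof (rule nn_integral_cong)
    fix r :: real
    show "ennreal (c * r^m * exp (-r\<^sup>2/2)) * (indicator {0<..} r * ennreal (real k * r^(k-1))) =
        ennreal (c * real k) * (ennreal (r^(m+k-1) * exp (-r\<^sup>2/2)) * indicator {0<..} r)"
    proof (cases "r > 0")
      case True
      have "r^m * r^(k-1) = r^(m+k-1)"
      proof (cases k)
        case 0 then show ?thesis using k1 by simp
      next
        case (Suc k') then show ?thesis by (simp add: power_add)
      qed
      then have "c * r^m * exp (-r\<^sup>2/2) * (real k * r^(k-1)) = c * real k * (r^(m+k-1) * exp (-r\<^sup>2/2))"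
        by (simp add: algebra_simps)
      then show ?thesis using True assms
        by (simp add: ennreal_mult[symmetric] mult_nonneg_nonneg)
    qed simp
  qed
  also have "\<dots> = ennreal (c * real k) * (\<integral>\<^sup>+r. ennreal (r^(m+k-1) * exp (-r\<^sup>2/2)) * indicator {0<..} r \<partial>lborel)"
    by (rule nn_integral_cmult) simp
  also have "\<dots> = ennreal (c * real k) * ennreal (sqrt (2*pi) / 2 * Mom (m+k-1))"
    by (simp only: half_moment)
  also have "\<dots> = ennreal (c * real k * (sqrt (2*pi) / 2 * Mom (m+k-1)))"
    using assms Mom_pos[of "m+k-1"] by (simp add: ennreal_mult[symmetric])
  finally show ?thesis .
qed

lemma vol_ball:
  assumes k: "k \<ge> 1"
  shows "emeasure (lebk k) (unit_ballk k) = ennreal (1 / Kc k (k-1))"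
proof -
  let ?c = "(1/sqrt(2*pi))^k"
  let ?psi = "\<lambda>r. ennreal (?c * r^0 * exp (-r\<^sup>2/2))"
  have P: "(\<integral>\<^sup>+x. (\<lambda>_. 1::ennreal) x * ?psi (norm2k k x) \<partial>lebk k) =
     (\<integral>\<^sup>+x. (\<lambda>_. 1::ennreal) x * indicator (unit_ballk k) x \<partial>lebk k) *
     (\<integral>\<^sup>+r. ?psi r * (indicator {0<..} r * ennreal (real k * r^(k-1))) \<partial>lborel)"
    using ball_fin by (intro polar k) auto
  have L: "(\<integral>\<^sup>+x. (\<lambda>_. 1::ennreal) x * ?psi (norm2k k x) \<partial>lebk k) = 1"
  proof -
    have "(\<integral>\<^sup>+x. (\<lambda>_. 1::ennreal) x * ?psi (norm2k k x) \<partial>lebk k)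
       = (\<integral>\<^sup>+x. (\<Prod>i<k. ennreal (std_normal_density (x i))) \<partial>lebk k)"
      by (intro nn_integral_cong) (simp add: prod_ennreal prod_sn)
    then show ?thesis by (simp add: gauss_one)
  qed
  have V: "(\<integral>\<^sup>+x. (\<lambda>_. 1::ennreal) x * indicator (unit_ballk k) x \<partial>lebk k) = emeasure (lebk k) (unit_ballk k)"
    by simp
  have R0: "(\<integral>\<^sup>+r. ?psi r * (indicator {0<..} r * ennreal (real k * r^(k-1))) \<partial>lborel)
      = ennreal (?c * real k * (sqrt (2*pi) / 2 * Mom (0+k-1)))"
    by (rule radial_int) (use k in auto)
  have R: "(\<integral>\<^sup>+r. ?psi r * (indicator {0<..} r * ennreal (real k * r^(k-1))) \<partial>lborel)
      = ennreal (Kc k (k-1))"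
    unfolding R0 Kc_def by simp
  have 1: "1 = emeasure (lebk k) (unit_ballk k) * ennreal (Kc k (k-1))"
    using P unfolding L V R .
  moreover have "ennreal (Kc k (k-1)) * ennreal (1 / Kc k (k-1)) = 1"
    using Kc_pos[OF k, of "k-1"] by (simp add: ennreal_mult[symmetric])
  ultimately have "emeasure (lebk k) (unit_ballk k) * 1 = 1 * ennreal (1 / Kc k (k-1))"
    by (metis mult.assoc)
  then show ?thesis by simp
qed


lemma ennreal_solve:
  assumes "J * ennreal K = ennreal E" "K > 0" "E \<ge> 0"
  shows "J = ennreal (E / K)"
proof -
  have "ennreal K * ennreal (1 / K) = 1" using assms by (simp add: ennreal_mult[symmetric])
  then have "J = J * ennreal K * ennreal (1 / K)" by (simp add: mult.assoc)
  also have "\<dots> = ennreal E * ennreal (1/K)" using assms by simp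
  also have "\<dots> = ennreal (E / K)" using assms by (simp add: ennreal_mult[symmetric])
  finally show ?thesis .
qed

lemma dotk_meas[measurable]: "(\<lambda>x. dotk k v x) \<in> borel_measurable (lebk k)"
  unfolding dotk_def by (intro borel_measurable_sum borel_measurable_times) (auto intro: comp_meas)

lemma dotk_scale: "dotk k v (\<lambda>i\<in>{..<k}. t * x i) = t * dotk k v x"
  unfolding dotk_def by (simp add: sum_distrib_left algebra_simps)

lemma Jv:
  assumes k: "k \<ge> 1"
  shows "(\<integral>\<^sup>+x. ennreal (\<bar>dotk k v x\<bar> / norm2k k x) * indicator (unit_ballk k) x \<partial>lebk k)
     = ennreal (norm2k k v * sqrt (2/pi) / Kc k k)"
proof -
  let ?c = "(1/sqrt(2*pi))^k"
  let ?g = "\<lambda>x. ennreal (\<bar>dotk k v x\<bar> / norm2k k x)"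
  let ?psi = "\<lambda>r. ennreal (?c * r^1 * exp (-r\<^sup>2/2))"
  have gle: "\<bar>dotk k v x\<bar> / norm2k k x \<le> norm2k k v" for x
  proof (cases "norm2k k x = 0")
    case False
    then have "norm2k k x > 0" using norm2k_nonneg[of k x] by simp
    then show ?thesis using cauchy_dotk[of k v x] by (simp add: divide_le_eq)
  qed (simp add: norm2k_nonneg)
  have gm: "?g \<in> borel_measurable (lebk k)" by measurable
  have hom: "?g (\<lambda>i\<in>{..<k}. t * x i) = ?g x" if "x \<in> space (lebk k)" "t > 0" for x t
    using that by (simp add: dotk_scale norm2k_scale abs_mult)
  have fin: "(\<integral>\<^sup>+x. ?g x * indicator (unit_ballk k) x \<partial>lebk k) < \<infinity>"
  proof -
    have "(\<integral>\<^sup>+x. ?g x * indicator (unit_ballk k) x \<partial>lebk k) \<le> (\<integral>\<^sup>+x. ennreal (norm2k k v) * indicator (unit_ballk k) x \<partial>lebk k)"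
      using gle by (intro nn_integral_mono) (auto intro!: mult_right_mono ennreal_leI simp: indicator_def)
    also have "\<dots> = ennreal (norm2k k v) * emeasure (lebk k) (unit_ballk k)"
      by (subst nn_integral_cmult_indicator) auto
    also have "\<dots> < \<infinity>" using ball_fin by (simp add: ennreal_mult_less_top)
    finally show ?thesis .
  qed
  have P: "(\<integral>\<^sup>+x. ?g x * ?psi (norm2k k x) \<partial>lebk k) =
     (\<integral>\<^sup>+x. ?g x * indicator (unit_ballk k) x \<partial>lebk k) *
     (\<integral>\<^sup>+r. ?psi r * (indicator {0<..} r * ennreal (real k * r^(k-1))) \<partial>lborel)"
    using fin hom by (intro polar k gm) auto
  have L: "(\<integral>\<^sup>+x. ?g x * ?psi (norm2k k x) \<partial>lebk k) = ennreal (norm2k k v * sqrt (2/pi))"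
  proof -
    have "(\<integral>\<^sup>+x. ?g x * ?psi (norm2k k x) \<partial>lebk k)
       = (\<integral>\<^sup>+x. (\<Prod>i<k. ennreal (std_normal_density (x i))) * ennreal \<bar>dotk k v x\<bar> \<partial>lebk k)"
    proof (intro nn_integral_cong)
      fix x
      show "?g x * ?psi (norm2k k x) = (\<Prod>i<k. ennreal (std_normal_density (x i))) * ennreal \<bar>dotk k v x\<bar>"
      proof (cases "norm2k k x = 0")
        case True
        then have "dotk k v x = 0" using cauchy_dotk[of k v x] by simp
        then show ?thesis using True by simp
      next
        case False
        then have np: "norm2k k x > 0" using norm2k_nonneg[of k x] by simp
        have "?g x * ?psi (norm2k k x) = ennreal (\<bar>dotk k v x\<bar> / norm2k k x * (?c * norm2k k x * exp (-(norm2k k x)\<^sup>2/2)))"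
          using np by (simp add: ennreal_mult[symmetric])
        also have "\<dots> = ennreal ((?c * exp (-(norm2k k x)\<^sup>2/2)) * \<bar>dotk k v x\<bar>)"
          using np by (simp add: field_simps)
        also have "\<dots> = ennreal (\<Prod>i<k. std_normal_density (x i)) * ennreal \<bar>dotk k v x\<bar>"
          by (simp add: prod_sn ennreal_mult)
        finally show ?thesis by (simp add: prod_ennreal)
      qed
    qed
    then show ?thesis by (simp add: gauss_abs)
  qed
  have R0: "(\<integral>\<^sup>+r. ?psi r * (indicator {0<..} r * ennreal (real k * r^(k-1))) \<partial>lborel)
      = ennreal (?c * real k * (sqrt (2*pi) / 2 * Mom (1+k-1)))"
    by (rule radial_int) (use k in auto)
  have R: "(\<integral>\<^sup>+r. ?psi r * (indicator {0<..} r * ennreal (real k * r^(k-1))) \<partial>lborel)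
      = ennreal (Kc k k)"
    unfolding R0 Kc_def by simp
  have "(\<integral>\<^sup>+x. ?g x * indicator (unit_ballk k) x \<partial>lebk k) * ennreal (Kc k k) = ennreal (norm2k k v * sqrt (2/pi))"
    using P unfolding L R by simp
  then show ?thesis using Kc_pos[OF k, of k] norm2k_nonneg[of k v] by (intro ennreal_solve) auto
qed


abbreviation uvec :: "nat \<Rightarrow> (nat \<Rightarrow> real) \<Rightarrow> (nat \<Rightarrow> real)" where
  "uvec k x \<equiv> (\<lambda>i. x i / norm2k k x)"

lemma dot_u: "dotk k v (uvec k x) = dotk k v x / norm2k k x"
  unfolding dotk_def by (simp add: sum_divide_distrib)

lemma norm_u: "norm2k k (uvec k x) \<le> 1"
proof (cases "norm2k k x = 0")
  case True then show ?thesis by (simp add: norm2k_def)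
next
  case False
  then have np: "norm2k k x > 0" using norm2k_nonneg[of k x] by simp
  have s: "(\<Sum>i<k. (x i)\<^sup>2) = (norm2k k x)\<^sup>2" unfolding norm2k_def by (simp add: sum_nonneg)
  have "(\<Sum>i<k. (x i / norm2k k x)\<^sup>2) = (\<Sum>i<k. (x i)\<^sup>2) / (norm2k k x)\<^sup>2"
    by (simp add: power_divide sum_divide_distrib)
  also have "\<dots> = 1" using s np by simp
  finally show ?thesis unfolding norm2k_def by simp
qed

lemma Vr: "k \<ge> 1 \<Longrightarrow> measure (lebk k) (unit_ballk k) = 1 / Kc k (k-1)"
  using vol_ball[of k] Kc_pos[of k "k-1"] by (simp add: measure_def)

lemma Vr_pos: "k \<ge> 1 \<Longrightarrow> measure (lebk k) (unit_ballk k) > 0"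
  using Vr[of k] Kc_pos[of k "k-1"] by simp

lemma bnd_int:
  fixes f :: "(nat \<Rightarrow> real) \<Rightarrow> real" and C :: real
  assumes "f \<in> borel_measurable (lebk k)" "\<And>x. \<bar>f x\<bar> \<le> C"
  shows "set_integrable (lebk k) (unit_ballk k) f"
  unfolding set_integrable_def
  by (rule integrableI_bounded_set_indicator[where B=C]) (use assms ball_fin in auto)

lemma KQ:
  assumes k: "k \<ge> 1"
  shows "set_integrable (lebk k) (unit_ballk k) (\<lambda>x. \<bar>dotk k v (uvec k x)\<bar>)"
    and "(LINT x:unit_ballk k|lebk k. \<bar>dotk k v (uvec k x)\<bar>) = norm2k k v * sqrt (2/pi) / Kc k k"
proof -
  let ?F = "\<lambda>x. indicator (unit_ballk k) x *\<^sub>R \<bar>dotk k v (uvec k x)\<bar>"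
  have "has_bochner_integral (lebk k) ?F (norm2k k v * sqrt (2/pi) / Kc k k)"
  proof (rule has_bochner_integral_nn_integral)
    show "?F \<in> borel_measurable (lebk k)" unfolding dot_u by measurable
    show "AE x in lebk k. 0 \<le> ?F x" by simp
    show "0 \<le> norm2k k v * sqrt (2/pi) / Kc k k" using Kc_pos[OF k, of k] norm2k_nonneg[of k v] by simp
    have "(\<integral>\<^sup>+x. ennreal (?F x) \<partial>lebk k) = (\<integral>\<^sup>+x. ennreal (\<bar>dotk k v x\<bar> / norm2k k x) * indicator (unit_ballk k) x \<partial>lebk k)"
      by (intro nn_integral_cong) (simp add: dot_u indicator_def abs_of_nonneg norm2k_nonneg)
    also have "\<dots> = ennreal (norm2k k v * sqrt (2/pi) / Kc k k)" by (rule Jv[OF k])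
    finally show "(\<integral>\<^sup>+x. ennreal (?F x) \<partial>lebk k) = ennreal (norm2k k v * sqrt (2/pi) / Kc k k)" .
  qed
  note hb = this
  show "set_integrable (lebk k) (unit_ballk k) (\<lambda>x. \<bar>dotk k v (uvec k x)\<bar>)"
    unfolding set_integrable_def using hb by (simp add: has_bochner_integral_iff)
  show "(LINT x:unit_ballk k|lebk k. \<bar>dotk k v (uvec k x)\<bar>) = norm2k k v * sqrt (2/pi) / Kc k k"
    unfolding set_lebesgue_integral_def using hb by (simp add: has_bochner_integral_iff)
qed

lemma Kc_ratio: "k \<ge> 1 \<Longrightarrow> Kc k (k-1) / Kc k k = Mom (k-1) / Mom k"
  unfolding Kc_def using Mom_pos[of k] by (simp add: field_simps)

lemma KEY:
  assumes k: "k \<ge> 1"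
  shows "pi / Beta (real k/2) (1/2) * ((LINT x:unit_ballk k|lebk k. \<bar>dotk k v (uvec k x)\<bar>) / measure (lebk k) (unit_ballk k))
     = norm2k k v"
proof -
  have B: "Beta (real k/2) (1/2) > 0" using Beta_pos[OF k] .
  have "(LINT x:unit_ballk k|lebk k. \<bar>dotk k v (uvec k x)\<bar>) / measure (lebk k) (unit_ballk k)
      = norm2k k v * (sqrt (2/pi) * (Kc k (k-1) / Kc k k))"
    unfolding KQ(2)[OF k] Vr[OF k] using Kc_pos[OF k, of k] Kc_pos[OF k, of "k-1"] by (simp add: field_simps)
  also have "\<dots> = norm2k k v * (Beta (real k/2) (1/2) / pi)"
    using Beta_Mom[OF k] Kc_ratio[OF k] by (simp add: mult.assoc)
  finally show ?thesis using B by simp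
qed


lemma W_alt:
  assumes A: "finite A" "A \<noteq> {}"
  shows "width k (convk A) (uvec k x) = Max ((\<lambda>a. dotk k a x / norm2k k x) ` A) - Min ((\<lambda>a. dotk k a x / norm2k k x) ` A)"
  unfolding width_eq[OF A] dot_u ..

lemma W_meas:
  assumes A: "finite A" "A \<noteq> {}"
  shows "(\<lambda>x. width k (convk A) (uvec k x)) \<in> borel_measurable (lebk k)"
  unfolding W_alt[OF A] using A(1) by measurable

lemma W_int:
  assumes A: "finite A" "A \<noteq> {}"
  shows "set_integrable (lebk k) (unit_ballk k) (\<lambda>x. width k (convk A) (uvec k x))"
proof (rule bnd_int[OF W_meas[OF A]])
  fix x
  show "\<bar>width k (convk A) (uvec k x)\<bar> \<le> diam2 k A"
    using width_nonneg[OF A, of k "uvec k x"] width_le[OF A norm_u] by simp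
qed

lemma dw_eq: "delta_w k A = pi / Beta (real k/2) (1/2) *
   ((LINT x:unit_ballk k|lebk k. width k (convk A) (uvec k x)) / measure (lebk k) (unit_ballk k))"
  unfolding delta_w_def mean_width_def sphere_avg_def ..

lemma dw_lower:
  assumes k: "k \<ge> 1" and A: "finite A" "a \<in> A" "b \<in> A"
  shows "norm2k k (\<lambda>i. a i - b i) \<le> delta_w k A"
proof -
  have ne: "A \<noteq> {}" using A by auto
  have "(LINT x:unit_ballk k|lebk k. \<bar>dotk k (\<lambda>i. a i - b i) (uvec k x)\<bar>) \<le> (LINT x:unit_ballk k|lebk k. width k (convk A) (uvec k x))"
    by (rule set_integral_mono[OF KQ(1)[OF k] W_int[OF A(1) ne]]) (rule width_ge_abs[OF A])
  then have "pi / Beta (real k/2) (1/2) * ((LINT x:unit_ballk k|lebk k. \<bar>dotk k (\<lambda>i. a i - b i) (uvec k x)\<bar>) / measure (lebk k) (unit_ballk k))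
      \<le> pi / Beta (real k/2) (1/2) * ((LINT x:unit_ballk k|lebk k. width k (convk A) (uvec k x)) / measure (lebk k) (unit_ballk k))"
    using Beta_pos[OF k] Vr_pos[OF k] by (intro mult_left_mono divide_right_mono) auto
  then show ?thesis unfolding KEY[OF k] dw_eq .
qed

lemma dw_upper:
  assumes k: "k \<ge> 1" and A: "finite A" "A \<noteq> {}"
  shows "delta_w k A \<le> 2 * sqrt (real k) * diam2 k A"
proof -
  have "(LINT x:unit_ballk k|lebk k. width k (convk A) (uvec k x)) \<le> (LINT x:unit_ballk k|lebk k. diam2 k A)"
    by (rule set_integral_mono[OF W_int[OF A]]) (auto intro: bnd_int[where C="\<bar>diam2 k A\<bar>"] width_le[OF A norm_u])
  also have "\<dots> = measure (lebk k) (unit_ballk k) * diam2 k A"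
    using ball_fin[of k] by (subst set_integral_const) auto
  finally have "(LINT x:unit_ballk k|lebk k. width k (convk A) (uvec k x)) / measure (lebk k) (unit_ballk k) \<le> diam2 k A"
    using Vr_pos[OF k] by (simp add: divide_le_eq mult.commute)
  then have "delta_w k A \<le> pi / Beta (real k/2) (1/2) * diam2 k A"
    unfolding dw_eq using Beta_pos[OF k] by (intro mult_left_mono) auto
  also have "\<dots> \<le> 2 * sqrt (real k) * diam2 k A"
    using Beta_upper[OF k] diam2_nonneg[OF A(1), of k] by (intro mult_right_mono) auto
  finally show ?thesis .
qed



lemma norm_e: "i < k \<Longrightarrow> norm2k k (e_vec i) = 1"
proof -
  assume i: "i < k"
  have "(\<Sum>j<k. (e_vec i j)\<^sup>2) = (\<Sum>j<k. if j = i then 1 else 0)"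
    by (intro sum.cong) (auto simp: e_vec_def)
  also have "\<dots> = 1" using i by simp
  finally show ?thesis unfolding norm2k_def by simp
qed

lemma dot_e: "i < k \<Longrightarrow> dotk k (e_vec i) u = u i"
proof -
  assume i: "i < k"
  have "dotk k (e_vec i) u = (\<Sum>j<k. if j = i then u j else 0)"
    unfolding dotk_def by (intro sum.cong) (auto simp: e_vec_def)
  also have "\<dots> = u i" using i by simp
  finally show ?thesis .
qed

lemma diam2_le_dw:
  assumes k: "k \<ge> 1" and A: "finite A" "A \<noteq> {}"
  shows "diam2 k A \<le> delta_w k A"
proof -
  obtain a where a: "a \<in> A" using A by auto
  have "0 \<le> delta_w k A" using dw_lower[OF k A(1) a a] by (simp add: norm2k_def)
  then show ?thesis unfolding diam2_def
    by (intro Max_ins0_le fin_pairs A(1)) (auto intro: dw_lower[OF k A(1)])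
qed

lemma seg_props:
  assumes k: "k \<ge> 1"
  shows "delta_w k {(\<lambda>_. 0), e_vec 0} = 1" "diam2 k {(\<lambda>_. 0), e_vec 0} = 1"
proof -
  let ?A = "{(\<lambda>_::nat. 0::real), e_vec 0}"
  have W: "width k (convk ?A) (uvec k x) = \<bar>dotk k (\<lambda>i. e_vec 0 i - 0) (uvec k x)\<bar>" for x
  proof -
    have z: "dotk k (\<lambda>_. 0) u = 0" for u by (simp add: dotk_def)
    show ?thesis by (subst width_eq) (auto simp: z)
  qed
  have "delta_w k ?A = pi / Beta (real k/2) (1/2) *
     ((LINT x:unit_ballk k|lebk k. \<bar>dotk k (\<lambda>i. e_vec 0 i - 0) (uvec k x)\<bar>) / measure (lebk k) (unit_ballk k))"
    unfolding dw_eq W ..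
  also have "\<dots> = norm2k k (\<lambda>i. e_vec 0 i - 0)" by (rule KEY[OF k])
  also have "\<dots> = 1" using norm_e[of 0 k] k by simp
  finally show "delta_w k ?A = 1" .
  have "norm2k k (\<lambda>i. a i - b i) \<le> 1" if "a \<in> ?A" "b \<in> ?A" for a b
  proof -
    have "norm2k k (\<lambda>i. a i - b i) = 0 \<or> norm2k k (\<lambda>i. a i - b i) = norm2k k (e_vec 0)"
      using that by (auto simp: norm2k_def e_vec_def power2_eq_square)
    then show ?thesis using norm_e[of 0 k] k by auto
  qed
  moreover have "norm2k k (\<lambda>i. e_vec 0 i - 0) = 1" using norm_e[of 0 k] k by simp
  ultimately show "diam2 k ?A = 1" unfolding diam2_def
    by (intro Max_ins0_eqI fin_pairs) force+
qed


lemma set_int_sum: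
  fixes f :: "nat \<Rightarrow> _ \<Rightarrow> real"
  assumes "finite I" "\<And>i. i \<in> I \<Longrightarrow> set_integrable M A (f i)"
  shows "set_integrable M A (\<lambda>x. \<Sum>i\<in>I. f i x)"
    and "(LINT x:A|M. (\<Sum>i\<in>I. f i x)) = (\<Sum>i\<in>I. (LINT x:A|M. f i x))"
proof -
  have eq: "(\<lambda>x. indicator A x *\<^sub>R (\<Sum>i\<in>I. f i x)) = (\<lambda>x. \<Sum>i\<in>I. indicator A x *\<^sub>R f i x)"
    by (simp add: sum_distrib_left)
  show "set_integrable M A (\<lambda>x. \<Sum>i\<in>I. f i x)"
    unfolding set_integrable_def eq using assms unfolding set_integrable_def by (intro Bochner_Integration.integrable_sum) auto
  show "(LINT x:A|M. (\<Sum>i\<in>I. f i x)) = (\<Sum>i\<in>I. (LINT x:A|M. f i x))"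
    unfolding set_lebesgue_integral_def eq using assms unfolding set_integrable_def by (intro Bochner_Integration.integral_sum) auto
qed

definition cv :: "nat set \<Rightarrow> nat \<Rightarrow> real" where "cv S = (\<lambda>i. if i \<in> S then 1 else 0)"

lemma dot_cv: "dotk k (cv S) u = (\<Sum>i<k. if i \<in> S then u i else 0)"
  unfolding dotk_def by (intro sum.cong) (auto simp: cv_def)

lemma cube_width:
  assumes "S = {i. i < k \<and> u i > 0}" "T = {i. i < k \<and> u i < 0}"
  shows "dotk k (cv S) u - dotk k (cv T) u = (\<Sum>i<k. \<bar>dotk k (e_vec i) u\<bar>)"
proof -
  have "dotk k (cv S) u - dotk k (cv T) u = (\<Sum>i<k. (if i \<in> S then u i else 0) - (if i \<in> T then u i else 0))"
    unfolding dot_cv by (simp add: sum_subtractf)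
  also have "\<dots> = (\<Sum>i<k. \<bar>dotk k (e_vec i) u\<bar>)"
    using assms by (intro sum.cong) (auto simp: dot_e)
  finally show ?thesis .
qed

lemma cube_props:
  assumes k: "k \<ge> 1"
  shows "real k \<le> delta_w k (cv ` Pow {..<k})" "diam2 k (cv ` Pow {..<k}) \<le> sqrt (real k)"
    "diam2 k (cv ` Pow {..<k}) > 0"
proof -
  let ?A = "cv ` Pow {..<k}"
  have A: "finite ?A" "?A \<noteq> {}" by auto
  let ?f = "\<lambda>i x. \<bar>dotk k (e_vec i) (uvec k x)\<bar>"
  have Wge: "(\<Sum>i<k. ?f i x) \<le> width k (convk ?A) (uvec k x)" for x
  proof -
    let ?u = "uvec k x"
    have "(\<Sum>i<k. ?f i x) = dotk k (cv {i. i < k \<and> ?u i > 0}) ?u - dotk k (cv {i. i < k \<and> ?u i < 0}) ?u"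
      by (rule cube_width[symmetric]) auto
    also have "\<dots> \<le> width k (convk ?A) ?u" by (rule width_ge) auto
    finally show ?thesis .
  qed
  have ints: "set_integrable (lebk k) (unit_ballk k) (?f i)" if "i < k" for i by (rule KQ(1)[OF k])
  have "(\<Sum>i<k. (LINT x:unit_ballk k|lebk k. ?f i x)) = (LINT x:unit_ballk k|lebk k. (\<Sum>i<k. ?f i x))"
    using ints by (intro set_int_sum(2)[symmetric]) auto
  also have "\<dots> \<le> (LINT x:unit_ballk k|lebk k. width k (convk ?A) (uvec k x))"
    by (rule set_integral_mono[OF set_int_sum(1) W_int[OF A]]) (use ints Wge in auto)
  finally have le: "(\<Sum>i<k. (LINT x:unit_ballk k|lebk k. ?f i x)) \<le> (LINT x:unit_ballk k|lebk k. width k (convk ?A) (uvec k x))" .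
  have "real k = (\<Sum>i<k. norm2k k (e_vec i))" by (simp add: norm_e)
  also have "\<dots> = (\<Sum>i<k. pi / Beta (real k/2) (1/2) * ((LINT x:unit_ballk k|lebk k. ?f i x) / measure (lebk k) (unit_ballk k)))"
    using KEY[OF k] by simp
  also have "\<dots> = pi / Beta (real k/2) (1/2) * ((\<Sum>i<k. (LINT x:unit_ballk k|lebk k. ?f i x)) / measure (lebk k) (unit_ballk k))"
    by (simp add: sum_distrib_left sum_divide_distrib)
  also have "\<dots> \<le> delta_w k ?A"
    unfolding dw_eq using le Beta_pos[OF k] Vr_pos[OF k] by (intro mult_left_mono divide_right_mono) auto
  finally show "real k \<le> delta_w k ?A" .
  have nle: "norm2k k (\<lambda>i. a i - b i) \<le> sqrt (real k)" if "a \<in> ?A" "b \<in> ?A" for a b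
  proof -
    have "(\<Sum>i<k. (a i - b i)\<^sup>2) \<le> (\<Sum>i<k. 1)"
      using that by (intro sum_mono) (auto simp: cv_def)
    then show ?thesis unfolding norm2k_def by simp
  qed
  then show "diam2 k ?A \<le> sqrt (real k)" unfolding diam2_def
    by (intro Max_ins0_le fin_pairs A) auto
  have "norm2k k (\<lambda>i. cv {..<k} i - cv {} i) = sqrt (real k)"
  proof -
    have "(\<Sum>i<k. (cv {..<k} i - cv {} i)\<^sup>2) = (\<Sum>i<k. 1)" by (intro sum.cong) (auto simp: cv_def)
    then show ?thesis unfolding norm2k_def by simp
  qed
  then have "sqrt (real k) \<le> diam2 k ?A"
    by (metis diam2_ge[OF A(1)] Pow_bottom Pow_top image_eqI)
  moreover have "sqrt (real k) > 0" using k by simp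
  ultimately show "diam2 k ?A > 0" by linarith
qed


lemma diam1_ge: "finite A \<Longrightarrow> a \<in> A \<Longrightarrow> b \<in> A \<Longrightarrow> norm1k k (\<lambda>i. a i - b i) \<le> diam1 k A"
  unfolding diam1_def by (rule Max_ins0_ge) (auto intro: fin_pairs)

lemma diam1_nonneg: "finite A \<Longrightarrow> 0 \<le> diam1 k A"
  unfolding diam1_def by (rule Max_ins0_nonneg) (auto intro: fin_pairs)

lemma coord_ge: "finite (A :: (nat \<Rightarrow> real) set) \<Longrightarrow> a \<in> A \<Longrightarrow> b \<in> A \<Longrightarrow> \<bar>a i - b i\<bar> \<le> Max (insert 0 {\<bar>a i - b i\<bar> | a b. a \<in> A \<and> b \<in> A})"
  by (rule Max_ins0_ge) (auto intro: fin_pairs)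

lemma l1_lower: assumes A: "finite A" shows "diam1 k A \<le> delta1 k A"
proof -
  have "norm1k k (\<lambda>i. a i - b i) \<le> delta1 k A" if "a \<in> A" "b \<in> A" for a b
    unfolding norm1k_def delta1_def using A that by (intro sum_mono coord_ge) auto
  moreover have "0 \<le> delta1 k A" unfolding delta1_def
    using A by (intro sum_nonneg Max_ins0_nonneg fin_pairs)
  ultimately show ?thesis unfolding diam1_def by (intro Max_ins0_le fin_pairs A) auto
qed

lemma l1_upper: assumes A: "finite A" shows "delta1 k A \<le> real k * diam1 k A"
proof -
  have "Max (insert 0 {\<bar>a i - b i\<bar> | a b. a \<in> A \<and> b \<in> A}) \<le> diam1 k A" if i: "i < k" for i
  proof (intro Max_ins0_le fin_pairs A diam1_nonneg)
    fix s assume "s \<in> {\<bar>a i - b i\<bar> | a b. a \<in> A \<and> b \<in> A}"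
    then obtain a b where ab: "a \<in> A" "b \<in> A" "s = \<bar>a i - b i\<bar>" by auto
    have "\<bar>a i - b i\<bar> \<le> norm1k k (\<lambda>i. a i - b i)"
      unfolding norm1k_def using i by (intro member_le_sum[where f="\<lambda>i. \<bar>a i - b i\<bar>"]) auto
    also have "\<dots> \<le> diam1 k A" using diam1_ge[OF A ab(1,2)] .
    finally show "s \<le> diam1 k A" using ab by simp
  qed
  then have "delta1 k A \<le> (\<Sum>i<k. diam1 k A)" unfolding delta1_def by (intro sum_mono) auto
  then show ?thesis by simp
qed

lemma norm1k_e: "i < k \<Longrightarrow> norm1k k (\<lambda>j. if j = i then s else 0) = \<bar>s\<bar>"
proof -
  assume i: "i < k"
  have "norm1k k (\<lambda>j. if j = i then s else 0) = (\<Sum>j<k. if j = i then \<bar>s\<bar> else 0)"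
    unfolding norm1k_def by (intro sum.cong) auto
  also have "\<dots> = \<bar>s\<bar>" using i by simp
  finally show ?thesis .
qed

lemma seg_l1:
  assumes k: "k \<ge> 1"
  shows "diam1 k {(\<lambda>_. 0), e_vec 0} = 1" "delta1 k {(\<lambda>_. 0), e_vec 0} = 1"
proof -
  let ?A = "{(\<lambda>_::nat. 0::real), e_vec 0}"
  have n: "norm1k k (\<lambda>i. a i - b i) = 0 \<or> norm1k k (\<lambda>i. a i - b i) = 1" if "a \<in> ?A" "b \<in> ?A" for a b
  proof -
    have "(\<lambda>i. a i - b i) = (\<lambda>j. if j = 0 then 0 else 0) \<or> (\<lambda>i. a i - b i) = (\<lambda>j. if j = 0 then 1 else 0)
      \<or> (\<lambda>i. a i - b i) = (\<lambda>j. if j = 0 then -1 else 0)"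
      using that by (auto simp: e_vec_def fun_eq_iff)
    then show ?thesis
    proof (elim disjE)
      assume h: "(\<lambda>i. a i - b i) = (\<lambda>j. if j = 0 then 0 else 0)"
      show ?thesis unfolding h using norm1k_e[of 0 k 0] k by simp
    next
      assume h: "(\<lambda>i. a i - b i) = (\<lambda>j. if j = 0 then 1 else 0)"
      show ?thesis unfolding h using norm1k_e[of 0 k 1] k by simp
    next
      assume h: "(\<lambda>i. a i - b i) = (\<lambda>j. if j = 0 then -1 else 0)"
      show ?thesis unfolding h using norm1k_e[of 0 k "-1"] k by simp
    qed
  qed
  have one: "norm1k k (\<lambda>i. e_vec 0 i - 0) = 1" using norm1k_e[of 0 k "1"] k by (simp add: e_vec_def)
  show "diam1 k ?A = 1" unfolding diam1_def
  proof (intro Max_ins0_eqI fin_pairs)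
    show "1 \<in> insert 0 {norm1k k (\<lambda>i. a i - b i) | a b. a \<in> ?A \<and> b \<in> ?A}"
      by (intro insertI2 CollectI exI[of _ "e_vec 0"] exI[of _ "\<lambda>_::nat. 0::real"]) (use one in simp)
  qed (use n in force)+
  have M: "Max (insert 0 {\<bar>a i - b i\<bar> | a b. a \<in> ?A \<and> b \<in> ?A}) = (if i = 0 then 1 else 0)" for i
  proof (intro Max_ins0_eqI fin_pairs)
    show "(if i = 0 then 1 else 0) \<in> insert 0 {\<bar>a i - b i\<bar> | a b. a \<in> ?A \<and> b \<in> ?A}"
    proof (cases "i = 0")
      case True
      then have "\<bar>e_vec 0 i - 0\<bar> = 1" by (simp add: e_vec_def)
      then show ?thesis using True by force
    qed simp
  qed (auto simp: e_vec_def)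
  show "delta1 k ?A = 1" unfolding delta1_def M using k by simp
qed

definition pv :: "nat \<Rightarrow> real \<Rightarrow> nat \<Rightarrow> real" where "pv i s = (\<lambda>j. if j = i then s else 0)"

lemma cross_l1:
  assumes k: "k \<ge> 1"
  defines "A \<equiv> (\<lambda>(i,s). pv i s) ` ({..<k} \<times> {-1, 1})"
  shows "diam1 k A = 2" "delta1 k A = real k * 2"
proof -
  have fin: "finite A" unfolding A_def by auto
  have mem: "pv i s \<in> A" if "i < k" "s \<in> {-1,1}" for i s unfolding A_def using that by force
  have bnd: "\<bar>a j\<bar> \<le> 1" if "a \<in> A" for a j using that unfolding A_def pv_def by auto
  have na: "norm1k k a = 1" if "a \<in> A" for a
    using that norm1k_e unfolding A_def pv_def by auto
  have "norm1k k (\<lambda>i. a i - b i) \<le> 2" if "a \<in> A" "b \<in> A" for a b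
  proof -
    have "norm1k k (\<lambda>i. a i - b i) \<le> norm1k k a + norm1k k b"
      unfolding norm1k_def sum.distrib[symmetric] by (intro sum_mono abs_triangle_ineq4)
    then show ?thesis using na that by simp
  qed
  moreover have "norm1k k (\<lambda>i. pv 0 1 i - pv 0 (-1) i) = 2"
  proof -
    have "(\<lambda>i. pv 0 1 i - pv 0 (-1) i) = (\<lambda>j. if j = 0 then 2 else 0)" by (auto simp: pv_def)
    then show ?thesis using norm1k_e[of 0 k 2] k by simp
  qed
  moreover have "pv 0 1 \<in> A" "pv 0 (-1) \<in> A" using k by (auto intro: mem)
  ultimately show "diam1 k A = 2" unfolding diam1_def
    by (intro Max_ins0_eqI fin_pairs fin) (force+)
  have M: "Max (insert 0 {\<bar>a i - b i\<bar> | a b. a \<in> A \<and> b \<in> A}) = 2" if i: "i < k" for i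
  proof (intro Max_ins0_eqI fin_pairs fin)
    have "\<bar>pv i 1 i - pv i (-1) i\<bar> = 2" by (simp add: pv_def)
    moreover have "pv i 1 \<in> A" "pv i (-1) \<in> A" using i by (auto intro: mem)
    ultimately show "2 \<in> insert 0 {\<bar>a i - b i\<bar> | a b. a \<in> A \<and> b \<in> A}" by force
    fix s assume "s \<in> {\<bar>a i - b i\<bar> | a b. a \<in> A \<and> b \<in> A}"
    then obtain a b where "a \<in> A" "b \<in> A" "s = \<bar>a i - b i\<bar>" by auto
    moreover have "\<bar>a i - b i\<bar> \<le> \<bar>a i\<bar> + \<bar>b i\<bar>" by (rule abs_triangle_ineq4)
    ultimately show "s \<le> 2" using bnd[of a i] bnd[of b i] by simp
  qed simp
  show "delta1 k A = real k * 2" unfolding delta1_def by (simp add: M)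
qed


theorem lemma12:
  shows "(\<exists>c>0. \<forall>k\<ge>1. \<forall>A. finite A \<and> A \<noteq> {} \<and> (\<forall>a\<in>A. in_Rk k a) \<longrightarrow>
            diam1 k A \<le> delta1 k A \<and> delta1 k A \<le> real k * diam1 k A \<and>
            diam2 k A \<le> delta_w k A \<and> delta_w k A \<le> c * sqrt (real k) * diam2 k A)
       \<and> (\<forall>k\<ge>1. \<exists>A. finite A \<and> A \<noteq> {} \<and> (\<forall>a\<in>A. in_Rk k a) \<and> diam1 k A > 0 \<and>
            delta1 k A = diam1 k A)
       \<and> (\<forall>k\<ge>1. \<exists>A. finite A \<and> A \<noteq> {} \<and> (\<forall>a\<in>A. in_Rk k a) \<and> diam1 k A > 0 \<and>
            delta1 k A = real k * diam1 k A)
       \<and> (\<forall>k\<ge>1. \<exists>A. finite A \<and> A \<noteq> {} \<and> (\<forall>a\<in>A. in_Rk k a) \<and> diam2 k A > 0 \<and>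
            delta_w k A = diam2 k A)
       \<and> (\<exists>c'>0. \<forall>k\<ge>1. \<exists>A. finite A \<and> A \<noteq> {} \<and> (\<forall>a\<in>A. in_Rk k a) \<and> diam2 k A > 0 \<and>
            delta_w k A \<ge> c' * sqrt (real k) * diam2 k A)"
proof (intro conjI)
  show "\<exists>c>0. \<forall>k\<ge>1. \<forall>A. finite A \<and> A \<noteq> {} \<and> (\<forall>a\<in>A. in_Rk k a) \<longrightarrow>
            diam1 k A \<le> delta1 k A \<and> delta1 k A \<le> real k * diam1 k A \<and>
            diam2 k A \<le> delta_w k A \<and> delta_w k A \<le> c * sqrt (real k) * diam2 k A"
    by (intro exI[of _ 2]) (auto simp: l1_lower l1_upper diam2_le_dw dw_upper)
  have segR: "\<forall>a\<in>{(\<lambda>_. 0), e_vec 0}. in_Rk k a" if "k \<ge> 1" for k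
    using that by (auto simp: in_Rk_def e_vec_def)
  show "\<forall>k\<ge>1. \<exists>A. finite A \<and> A \<noteq> {} \<and> (\<forall>a\<in>A. in_Rk k a) \<and> diam1 k A > 0 \<and> delta1 k A = diam1 k A"
  proof (intro allI impI)
    fix k :: nat assume k: "k \<ge> 1"
    show "\<exists>A. finite A \<and> A \<noteq> {} \<and> (\<forall>a\<in>A. in_Rk k a) \<and> diam1 k A > 0 \<and> delta1 k A = diam1 k A"
      by (intro exI[of _ "{(\<lambda>_. 0), e_vec 0}"]) (use seg_l1[OF k] segR[OF k] in auto)
  qed
  show "\<forall>k\<ge>1. \<exists>A. finite A \<and> A \<noteq> {} \<and> (\<forall>a\<in>A. in_Rk k a) \<and> diam1 k A > 0 \<and> delta1 k A = real k * diam1 k A"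
  proof (intro allI impI)
    fix k :: nat assume k: "k \<ge> 1"
    let ?A = "(\<lambda>(i,s). pv i s) ` ({..<k} \<times> {-1, 1})"
    have R: "\<forall>a\<in>?A. in_Rk k a" by (auto simp: in_Rk_def pv_def)
    have "(0, 1) \<in> {..<k} \<times> {-1, 1::real}" using k by auto
    then have ne: "?A \<noteq> {}" by blast
    show "\<exists>A. finite A \<and> A \<noteq> {} \<and> (\<forall>a\<in>A. in_Rk k a) \<and> diam1 k A > 0 \<and> delta1 k A = real k * diam1 k A"
      by (intro exI[of _ ?A]) (use cross_l1[OF k] R ne in auto)
  qed
  show "\<forall>k\<ge>1. \<exists>A. finite A \<and> A \<noteq> {} \<and> (\<forall>a\<in>A. in_Rk k a) \<and> diam2 k A > 0 \<and> delta_w k A = diam2 k A"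
  proof (intro allI impI)
    fix k :: nat assume k: "k \<ge> 1"
    show "\<exists>A. finite A \<and> A \<noteq> {} \<and> (\<forall>a\<in>A. in_Rk k a) \<and> diam2 k A > 0 \<and> delta_w k A = diam2 k A"
      by (intro exI[of _ "{(\<lambda>_. 0), e_vec 0}"]) (use seg_props[OF k] segR[OF k] in auto)
  qed
  show "\<exists>c'>0. \<forall>k\<ge>1. \<exists>A. finite A \<and> A \<noteq> {} \<and> (\<forall>a\<in>A. in_Rk k a) \<and> diam2 k A > 0 \<and>
            delta_w k A \<ge> c' * sqrt (real k) * diam2 k A"
  proof (intro exI[of _ "1::real"] conjI allI impI)
    fix k :: nat assume k: "k \<ge> 1"
    let ?A = "cv ` Pow {..<k}"
    have R: "\<forall>a\<in>?A. in_Rk k a" by (auto simp: in_Rk_def cv_def)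
    have "1 * sqrt (real k) * diam2 k ?A \<le> sqrt (real k) * sqrt (real k)"
      using cube_props(2)[OF k] by (simp only: mult_1_left) (rule mult_left_mono, auto)
    also have "\<dots> = real k" by simp
    also have "\<dots> \<le> delta_w k ?A" by (rule cube_props(1)[OF k])
    finally show "\<exists>A. finite A \<and> A \<noteq> {} \<and> (\<forall>a\<in>A. in_Rk k a) \<and> diam2 k A > 0 \<and> delta_w k A \<ge> 1 * sqrt (real k) * diam2 k A"
      by (intro exI[of _ ?A]) (use cube_props(3)[OF k] R in auto)
  qed simp
qed


end
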